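(* Consider the expectation problem (EX). Suppose Assumption A and Assumption V hold and $g_k$ is the sampled estimate with the sample-size rule (so Condition C holds in (EX)). Run the Algorithm with Option I with $\tilde\eta_k=\tilde\eta\in(0,1)$, $\tilde\iota_0\in\left[0,\sqrt{\frac{1-\tilde\eta}{2}}\right)$, $\tilde\delta_k=\frac{1}{(k+1)^{1+\nu}}$ for all $k\ge0$ with some $\nu>0$, and $\alpha_k=\alpha\le\frac{1-\tilde\eta}{2L}$. For $\epsilon>0$ let $K_\epsilon$ be the first iteration index $k$ at which $\min\{\mathbb E[\|R^{true}_{\alpha}(x_k)\|^2],\|R^{true}_{\alpha}(x_k)\|^2\}\le\epsilon$. Then the number of stochastic gradient evaluations $\sum_{k=0}^{K_\epsilon-1}|S_k|$ is $\mathcal O(\epsilon^{-(2+\nu)})$. If instead $\tilde\delta_k=0$ for all $k$, it is $\mathcal O(\epsilon^{-2})$.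
   Context: Problem: minimize $\phi(x)=f(x)+h(x)$ over $x\in\mathbb{R}^d$. Assumption A: $f:\mathbb{R}^d\to\mathbb{R}$ is continuously differentiable with $L$-Lipschitz continuous gradient ($L>0$), and $h:\mathbb{R}^d\to\mathbb{R}\cup\{+\infty\}$ is closed, convex and proper; $\phi^*=\inf\phi>-\infty$. Expectation problem (EX): $f(x)=\mathbb E_{\xi\sim\mathcal P}[F(x,\xi)]$. For $\alpha>0$, $\mathrm{prox}_{\alpha,h}(y)=\arg\min_{x\in\mathbb{R}^d}\{h(x)+\frac{1}{2\alpha}\|x-y\|^2\}$. Algorithm: given $x_0\in\mathbb{R}^d$, $y_0=x_0$, step sizes $\alpha_k>0$ and parameters $\beta_k$, for $k=0,1,2,\dots$: compute an estimate $g_k$ of $\nabla f(y_k)$; set $x_{k+1}=\mathrm{prox}_{\alpha_k,h}(y_k-\alpha_kg_k)$; under Option I set $y_{k+1}=x_{k+1}$, under Option II set $y_{k+1}=x_{k+1}+\beta_{k+1}(x_{k+1}-x_k)$. Define $R_{\alpha_k}(y_k)=\frac{1}{\alpha_k}(y_k-x_{k+1})$, $\hat x_{k+1}=\mathrm{prox}_{\alpha_k,h}(y_k-\alpha_k\nabla f(y_k))$ and $R^{true}_{\alpha_k}(y_k)=\frac{1}{\alpha_k}(y_k-\hat x_{k+1})$. Let $\mathcal G_k$ be the $\sigma$-algebra generated by $x_0,g_0,\dots,g_{k-1}$, $\mathbb E_k[\cdot]=\mathbb E[\cdot\mid\mathcal G_k]$, and $\mathbb E[\cdot]$ is total expectation.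 Condition C in (EX): for all $k\ge0$, $\mathbb E_k[\|g_k-\nabla f(y_k)\|^2]\le\frac{\tilde\eta_k^2}{4}\|\mathbb E_k[R_{\alpha_k}(y_k)]\|^2+\tilde\iota_0^2\tilde\delta_k^2$ with $\tilde\eta_k\in[0,1)$, $\tilde\iota_0\ge0$, $\tilde\delta_k\ge0$. Assumption V in (EX): there is $\sigma\ge0$ with $\mathbb E[\|\nabla F(y_k,\xi)-\nabla f(y_k)\|^2\mid\mathcal G_k]\le\sigma^2$ for all $k$, $\xi\sim\mathcal P$ independent of $\mathcal G_k$. Sampled estimate with sample-size rule: $g_k=\frac{1}{|S_k|}\sum_{\xi\in S_k}\nabla F(y_k,\xi)$, $S_k$ a set of i.i.d. samples from $\mathcal P$ independent of $\mathcal G_k$, with $|S_k|=\left\lceil\sigma^2/\left(\frac{\tilde\eta_k^2}{4}\|\mathbb E_k[R_{\alpha_k}(y_k)]\|^2+\tilde\iota_0^2\tilde\delta_k^2\right)\right\rceil$; each iteration costs $|S_k|$ stochastic gradient evaluations. *)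

theory Defs
  imports "HOL-Probability.Probability"
begin

definition proper_fun :: "('a \<Rightarrow> ereal) \<Rightarrow> bool" where
  "proper_fun h \<longleftrightarrow> (\<forall>x. h x \<noteq> -\<infinity>) \<and> (\<exists>x. h x \<noteq> \<infinity>)"

definition convex_fun :: "('a::real_vector \<Rightarrow> ereal) \<Rightarrow> bool" where
  "convex_fun h \<longleftrightarrow> (\<forall>x y. \<forall>t\<in>{0..1::real}.
      h ((1 - t) *\<^sub>R x + t *\<^sub>R y) \<le> ereal (1 - t) * h x + ereal t * h y)"

definition closed_fun :: "('a::topological_space \<Rightarrow> ereal) \<Rightarrow> bool" where
  "closed_fun h \<longleftrightarrow> closed {(x, r::real). h x \<le> ereal r}"

definition prox :: "real \<Rightarrow> ('a::real_normed_vector \<Rightarrow> ereal) \<Rightarrow> 'a \<Rightarrow> 'a" where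
  "prox \<alpha> h y = (SOME z. \<forall>w. h z + ereal (norm (z - y)^2 / (2 * \<alpha>))
                             \<le> h w + ereal (norm (w - y)^2 / (2 * \<alpha>)))"

definition gen_sigma :: "'w measure \<Rightarrow> ('w \<Rightarrow> 'a::topological_space) set \<Rightarrow> 'w measure" where
  "gen_sigma M Xs = sigma (space M) (\<Union>X\<in>Xs. {X -` A \<inter> space M | A. A \<in> sets borel})"

definition vcond_exp :: "'w measure \<Rightarrow> 'w measure \<Rightarrow> ('w \<Rightarrow> 'a::euclidean_space) \<Rightarrow> 'w \<Rightarrow> 'a" where
  "vcond_exp M F X = (\<lambda>\<omega>. \<Sum>b\<in>Basis. real_cond_exp M F (\<lambda>\<omega>'. X \<omega>' \<bullet> b) \<omega> *\<^sub>R b)"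

end

theory Submission
  imports Defs
begin

lemma norm_add_scale_sq:
  fixes a b :: "'a::real_inner"
  shows "(norm (a + t *\<^sub>R b))^2 = (norm a)^2 + 2 * t * (a \<bullet> b) + t^2 * (norm b)^2"
  by (simp only: power2_norm_eq_inner) (simp add: inner_add_left inner_add_right inner_commute algebra_simps power2_eq_square)

lemma le_of_le_eps:
  fixes A B C :: real
  assumes "\<And>t. 0 < t \<Longrightarrow> t \<le> 1 \<Longrightarrow> A \<le> B + t * C" "C \<ge> 0"
  shows "A \<le> B"
proof (rule ccontr)
  assume "\<not> A \<le> B"
  then have d: "A - B > 0" by simp
  define t where "t = min 1 ((A - B) / (2 * (C + 1)))"
  have t0: "t > 0" using d assms(2) by (simp add: t_def)
  have t1: "t \<le> 1" by (simp add: t_def)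
  have "t * C \<le> t * (C + 1)" using t0 by simp
  also have "t * (C + 1) \<le> (A - B) / (2 * (C + 1)) * (C + 1)"
    using assms(2) by (intro mult_right_mono) (auto simp: t_def)
  also have "\<dots> = (A - B) / 2" using assms(2) by (simp add: field_simps)
  finally have "t * C \<le> (A - B) / 2" .
  moreover have "A \<le> B + t * C" using assms(1)[OF t0 t1] .
  ultimately have "A - B \<le> (A - B) / 2" by linarith
  with d show False by (simp add: field_simps)
qed

lemma ereal_le_of_gt:
  fixes x :: ereal and \<mu> :: real
  assumes "\<And>t. t > \<mu> \<Longrightarrow> x \<le> ereal t"
  shows "x \<le> ereal \<mu>"
proof (cases x)
  case (real r)
  have "r \<le> \<mu> + e" if "e > 0" for e using assms[of "\<mu> + e"] that real by simp
  then have "r \<le> \<mu>" by (meson field_le_epsilon)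
  then show ?thesis using real by simp
next
  case PInf
  then show ?thesis using assms[of "\<mu> + 1"] by simp
qed simp

lemma prox_exists:
  fixes h :: "'a::euclidean_space \<Rightarrow> ereal" and y :: 'a
  assumes hprop: "proper_fun h" and cl: "closed_fun h" and al: "\<alpha> > 0"
    and lb: "\<And>z. ereal (a - b * norm (z - y) - c * (norm (z - y))^2) \<le> h z"
    and b: "b \<ge> 0" and c: "c < 1 / (2 * \<alpha>)"
  shows "\<exists>p. \<forall>w. h p + ereal ((norm (p - y))^2 / (2 * \<alpha>)) \<le> h w + ereal ((norm (w - y))^2 / (2 * \<alpha>))"
proof -
  define q where "q z = (norm (z - y))^2 / (2 * \<alpha>)" for z
  define \<psi> where "\<psi> z = h z + ereal (q z)" for z
  define d where "d = 1 / (2 * \<alpha>) - c"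
  have d0: "d > 0" using c by (simp add: d_def)
  have psi_lb: "ereal (a - b * norm (z - y) + d * (norm (z - y))^2) \<le> \<psi> z" for z
  proof -
    have "ereal (a - b * norm (z - y) + d * (norm (z - y))^2)
        = ereal (a - b * norm (z - y) - c * (norm (z - y))^2) + ereal (q z)"
      by (simp add: d_def q_def algebra_simps)
    also have "\<dots> \<le> \<psi> z" unfolding \<psi>_def by (intro add_right_mono lb)
    finally show ?thesis .
  qed
  have quad_lb: "a - b * r + d * r^2 \<ge> a - b^2 / (4 * d)" for r
  proof -
    have "0 \<le> d * (r - b / (2 * d))^2" using d0 by simp
    also have "d * (r - b / (2 * d))^2 = d * r^2 - b * r + b^2 / (4 * d)"
      using d0 by (simp add: power2_eq_square field_simps)
    finally show ?thesis by simp
  qed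
  define lo where "lo = a - b^2 / (4 * d)"
  have psi_lo: "ereal lo \<le> \<psi> z" for z
    using psi_lb[of z] quad_lb[of "norm (z - y)"] unfolding lo_def
    by (meson ereal_less_eq(3) order_trans)
  have bnd: "norm (z - y) \<le> max 1 ((\<bar>K - a\<bar> + b) / d)" if "\<psi> z \<le> ereal K" for z K
  proof (cases "norm (z - y) \<le> 1")
    case False
    define r where "r = norm (z - y)"
    have r1: "r > 1" using False r_def by simp
    have "a - b * r + d * r^2 \<le> K" using psi_lb[of z] that r_def
      by (metis ereal_less_eq(3) order_trans)
    then have "d * r^2 \<le> \<bar>K - a\<bar> + b * r" by linarith
    also have "\<dots> \<le> (\<bar>K - a\<bar> + b) * r"
    proof -
      have "0 \<le> \<bar>K - a\<bar> * (r - 1)" using r1 by simp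
      then show ?thesis by (simp add: algebra_simps)
    qed
    finally have "d * r * r \<le> (\<bar>K - a\<bar> + b) * r" by (simp add: power2_eq_square mult.assoc)
    then have "d * r \<le> \<bar>K - a\<bar> + b" using r1 by simp
    then have "r \<le> (\<bar>K - a\<bar> + b) / d" using d0 by (simp add: field_simps)
    then show ?thesis using r_def by simp
  qed simp
  obtain z0 where z0: "h z0 \<noteq> \<infinity>" using hprop unfolding proper_fun_def by auto
  have hfin: "h z \<noteq> -\<infinity>" for z using hprop unfolding proper_fun_def by auto
  define \<mu> where "\<mu> = (INF z. \<psi> z)"
  have mu_le: "\<mu> \<le> \<psi> z" for z unfolding \<mu>_def by (rule INF_lower) simp
  have mu_lo: "ereal lo \<le> \<mu>" unfolding \<mu>_def by (rule INF_greatest) (rule psi_lo)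
  have psi_z0: "\<psi> z0 \<noteq> \<infinity>" using z0 hfin[of z0] unfolding \<psi>_def by simp
  then have "\<mu> \<noteq> \<infinity>" using mu_le[of z0] by (metis ereal_infty_less_eq(1))
  moreover have "\<mu> \<noteq> -\<infinity>" using mu_lo by auto
  ultimately obtain m where m: "\<mu> = ereal m" by (cases \<mu>) auto
  have "\<exists>z. \<psi> z < ereal (m + 1 / (Suc n))" for n :: nat
  proof -
    have "\<mu> < ereal (m + 1 / Suc n)" using m by simp
    then show ?thesis unfolding \<mu>_def by (simp add: INF_less_iff)
  qed
  then obtain zs where zs: "\<And>n. \<psi> (zs n) < ereal (m + 1 / Suc n)" by metis
  have zs_b: "norm (zs n - y) \<le> max 1 ((\<bar>(m + 1) - a\<bar> + b) / d)" for n
  proof -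
    have "1 / real (Suc n) \<le> 1" by simp
    then have "\<psi> (zs n) \<le> ereal (m + 1)" using zs[of n]
      by (metis add_left_mono ereal_less_eq(3) less_imp_le order_trans)
    then show ?thesis by (rule bnd)
  qed
  have "bounded (range zs)"
  proof -
    have "norm (zs n) \<le> norm y + max 1 ((\<bar>(m + 1) - a\<bar> + b) / d)" for n
      using zs_b[of n] norm_triangle_ineq2[of "zs n" y] by linarith
    then show ?thesis unfolding bounded_iff by blast
  qed
  then obtain p r where r: "strict_mono r" and lim: "(zs \<circ> r) \<longlonglongrightarrow> p"
    using bounded_imp_convergent_subsequence[of zs] by auto
  have qcont: "continuous_on UNIV q" unfolding q_def using al by (auto intro!: continuous_intros)
  have "\<psi> p \<le> ereal m"
  proof (rule ereal_le_of_gt)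
    fix t assume t: "t > m"
    have ev: "eventually (\<lambda>n. \<psi> ((zs \<circ> r) n) \<le> ereal t) sequentially"
    proof -
      obtain N :: nat where N: "1 / Suc N < t - m"
        using reals_Archimedean[of "t - m"] t by (auto simp: inverse_eq_divide)
      show ?thesis
      proof (rule eventually_sequentiallyI[of N])
        fix n assume "N \<le> n"
        then have "N \<le> r n" using r seq_suble[OF r, of n] by linarith
        then have "1 / real (Suc (r n)) \<le> 1 / Suc N" by (simp add: frac_le)
        then have "m + 1 / real (Suc (r n)) \<le> t" using N by linarith
        then show "\<psi> ((zs \<circ> r) n) \<le> ereal t" using zs[of "r n"]
          by (metis comp_apply ereal_less_eq(3) less_imp_le order_trans)
      qed
    qed
    define E where "E = {(x, s::real). h x \<le> ereal s}"
    have clE: "closed E" using cl unfolding closed_fun_def E_def by simp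
    have "eventually (\<lambda>n. (((zs \<circ> r) n), t - q ((zs \<circ> r) n)) \<in> E) sequentially"
    proof (rule eventually_mono[OF ev])
      fix n assume "\<psi> ((zs \<circ> r) n) \<le> ereal t"
      then have "h ((zs \<circ> r) n) \<le> ereal (t - q ((zs \<circ> r) n))"
        unfolding \<psi>_def using hfin[of "(zs \<circ> r) n"] by (cases "h ((zs \<circ> r) n)") auto
      then show "((zs \<circ> r) n, t - q ((zs \<circ> r) n)) \<in> E" unfolding E_def by simp
    qed
    moreover have "((\<lambda>n. (((zs \<circ> r) n), t - q ((zs \<circ> r) n))) \<longlongrightarrow> (p, t - q p)) sequentially"
    proof -
      have l1: "(\<lambda>n. zs (r n)) \<longlonglongrightarrow> p" using lim by (simp add: comp_def)
      have l2: "(\<lambda>n. q (zs (r n))) \<longlonglongrightarrow> q p" using continuous_on_tendsto_compose[OF qcont l1] by simp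
      show ?thesis using l1 l2 by (auto intro!: tendsto_intros)
    qed
    ultimately have "(p, t - q p) \<in> E"
      using clE by (metis Lim_in_closed_set trivial_limit_sequentially)
    then have "h p \<le> ereal (t - q p)" unfolding E_def by simp
    then show "\<psi> p \<le> ereal t" unfolding \<psi>_def using hfin[of p]
      by (cases "h p") auto
  qed
  then have "\<forall>w. \<psi> p \<le> \<psi> w" using m mu_le by (metis order_trans)
  then show ?thesis unfolding \<psi>_def q_def by blast
qed

lemma prox_vi:
  fixes h :: "'a::real_inner \<Rightarrow> ereal"
  assumes cvx: "convex_fun h" and hprop: "proper_fun h" and al: "\<alpha> > 0"
    and minp: "\<And>w. h p + ereal ((norm (p - y))^2 / (2 * \<alpha>)) \<le> h w + ereal ((norm (w - y))^2 / (2 * \<alpha>))"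
    and hw: "h w \<noteq> \<infinity>"
  shows "h p \<noteq> \<infinity>" "h p + ereal (((y - p) \<bullet> (w - p)) / \<alpha>) \<le> h w"
proof -
  have hninf: "h z \<noteq> -\<infinity>" for z using hprop unfolding proper_fun_def by auto
  obtain hw' where hw': "h w = ereal hw'" using hw hninf[of w] by (cases "h w") auto
  show hp: "h p \<noteq> \<infinity>" using minp[of w] hw' by auto
  obtain hp' where hp': "h p = ereal hp'" using hp hninf[of p] by (cases "h p") auto
  define A where "A = (norm (p - y))^2 / (2 * \<alpha>)"
  have key: "hp' \<le> hw' + ((p - y) \<bullet> (w - p)) / \<alpha> + t * ((norm (w - p))^2 / (2 * \<alpha>))"
    if t: "0 < t" "t \<le> 1" for t
  proof -
    define wt where "wt = (1 - t) *\<^sub>R p + t *\<^sub>R w"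
    have "h wt \<le> ereal (1 - t) * h p + ereal t * h w"
      using cvx t unfolding convex_fun_def wt_def by auto
    also have "\<dots> = ereal ((1 - t) * hp' + t * hw')" using hp' hw' by simp
    finally have hwt: "h wt \<le> ereal ((1 - t) * hp' + t * hw')" .
    have wty: "wt - y = (p - y) + t *\<^sub>R (w - p)" unfolding wt_def by (simp add: algebra_simps)
    have nq: "(norm (wt - y))^2 = (norm (p - y))^2 + 2 * t * ((p - y) \<bullet> (w - p)) + t^2 * (norm (w - p))^2"
      unfolding wty by (rule norm_add_scale_sq)
    have "ereal (hp' + A) \<le> h wt + ereal ((norm (wt - y))^2 / (2 * \<alpha>))"
      using minp[of wt] hp' unfolding A_def by simp
    also have "\<dots> \<le> ereal ((1 - t) * hp' + t * hw') + ereal ((norm (wt - y))^2 / (2 * \<alpha>))"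
      by (intro add_right_mono hwt)
    finally have ineq: "hp' + A \<le> (1 - t) * hp' + t * hw' + (norm (wt - y))^2 / (2 * \<alpha>)" by simp
    define X where "X = (p - y) \<bullet> (w - p)"
    define Y where "Y = (norm (w - p))^2"
    have e1: "(norm (wt - y))^2 / (2 * \<alpha>) = A + t * (X / \<alpha>) + t * (t * (Y / (2 * \<alpha>)))"
    proof -
      have "(norm (wt - y))^2 / (2 * \<alpha>) = (norm (p - y))^2 / (2 * \<alpha>) + (2 * t * X) / (2 * \<alpha>) + (t^2 * Y) / (2 * \<alpha>)"
        unfolding nq X_def Y_def by (simp only: add_divide_distrib)
      also have "(2 * t * X) / (2 * \<alpha>) = t * (X / \<alpha>)" by simp
      also have "(t^2 * Y) / (2 * \<alpha>) = t * (t * (Y / (2 * \<alpha>)))" by (simp add: power2_eq_square)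
      finally show ?thesis unfolding A_def .
    qed
    from ineq have "hp' + A \<le> hp' - t * hp' + t * hw' + (A + t * (X / \<alpha>) + t * (t * (Y / (2 * \<alpha>))))"
      unfolding e1 by (simp add: left_diff_distrib)
    then have "t * hp' \<le> t * hw' + t * (X / \<alpha>) + t * (t * (Y / (2 * \<alpha>)))" by linarith
    then have "t * hp' \<le> t * (hw' + X / \<alpha> + t * (Y / (2 * \<alpha>)))" by (simp add: distrib_left)
    then have "hp' \<le> hw' + X / \<alpha> + t * (Y / (2 * \<alpha>))" using t by simp
    then show ?thesis unfolding X_def Y_def .
  qed
  have "hp' \<le> hw' + ((p - y) \<bullet> (w - p)) / \<alpha>"
    by (rule le_of_le_eps[OF key]) (use al in auto)
  then have "hp' + ((y - p) \<bullet> (w - p)) / \<alpha> \<le> hw'"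
    by (simp add: inner_diff_left inner_commute algebra_simps diff_divide_distrib)
  then show "h p + ereal (((y - p) \<bullet> (w - p)) / \<alpha>) \<le> h w" using hp' hw' by simp
qed

lemma prox_nonexp_aux:
  fixes h :: "'a::real_inner \<Rightarrow> ereal"
  assumes cvx: "convex_fun h" and hprop: "proper_fun h" and al: "\<alpha> > 0"
    and min1: "\<And>w. h p1 + ereal ((norm (p1 - y1))^2 / (2 * \<alpha>)) \<le> h w + ereal ((norm (w - y1))^2 / (2 * \<alpha>))"
    and min2: "\<And>w. h p2 + ereal ((norm (p2 - y2))^2 / (2 * \<alpha>)) \<le> h w + ereal ((norm (w - y2))^2 / (2 * \<alpha>))"
    and f1: "h p1 \<noteq> \<infinity>" and f2: "h p2 \<noteq> \<infinity>"
  shows "norm (p1 - p2) \<le> norm (y1 - y2)"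
proof -
  have hninf: "h z \<noteq> -\<infinity>" for z using hprop unfolding proper_fun_def by auto
  obtain a1 where a1: "h p1 = ereal a1" using f1 hninf[of p1] by (cases "h p1") auto
  obtain a2 where a2: "h p2 = ereal a2" using f2 hninf[of p2] by (cases "h p2") auto
  have v1: "a1 + ((y1 - p1) \<bullet> (p2 - p1)) / \<alpha> \<le> a2"
    using prox_vi(2)[OF cvx hprop al min1 f2] a1 a2 by simp
  have v2: "a2 + ((y2 - p2) \<bullet> (p1 - p2)) / \<alpha> \<le> a1"
    using prox_vi(2)[OF cvx hprop al min2 f1] a1 a2 by simp
  have "((y1 - p1) \<bullet> (p2 - p1)) / \<alpha> + ((y2 - p2) \<bullet> (p1 - p2)) / \<alpha> \<le> 0" using v1 v2 by linarith
  then have s: "(y1 - p1) \<bullet> (p2 - p1) + (y2 - p2) \<bullet> (p1 - p2) \<le> 0"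
  proof -
    have "((y1 - p1) \<bullet> (p2 - p1) + (y2 - p2) \<bullet> (p1 - p2)) / \<alpha> \<le> 0"
      using \<open>_ \<le> 0\<close> by (simp only: add_divide_distrib)
    then show ?thesis using al by (simp add: divide_le_0_iff)
  qed
  have "(y1 - p1) \<bullet> (p2 - p1) + (y2 - p2) \<bullet> (p1 - p2) = (p1 - p2) \<bullet> (p1 - p2) - (y1 - y2) \<bullet> (p1 - p2)"
    by (simp add: inner_diff_left inner_diff_right inner_commute algebra_simps)
  with s have "(norm (p1 - p2))^2 \<le> (y1 - y2) \<bullet> (p1 - p2)"
    by (simp add: power2_norm_eq_inner)
  also have "\<dots> \<le> norm (y1 - y2) * norm (p1 - p2)" by (rule norm_cauchy_schwarz)
  finally have "norm (p1 - p2) * norm (p1 - p2) \<le> norm (y1 - y2) * norm (p1 - p2)"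
    by (simp add: power2_eq_square)
  then show ?thesis
    by (cases "norm (p1 - p2) = 0") (auto simp: mult_le_cancel_right)
qed

lemma descent_lemma:
  fixes f :: "'a::euclidean_space \<Rightarrow> real"
  assumes fg: "\<And>z. (f has_derivative (\<lambda>v. gradf z \<bullet> v)) (at z)"
    and lip: "\<And>z w. norm (gradf z - gradf w) \<le> L * norm (z - w)" and L: "L \<ge> 0"
  shows "f z \<le> f w + gradf w \<bullet> (z - w) + L * (norm (z - w))^2"
proof -
  define d where "d = z - w"
  define g where "g t = f (w + t *\<^sub>R d)" for t :: real
  have der: "DERIV g t :> gradf (w + t *\<^sub>R d) \<bullet> d" for t
  proof -
    have "((\<lambda>t. w + t *\<^sub>R d) has_derivative (\<lambda>u. u *\<^sub>R d)) (at t)"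
      by (auto intro!: derivative_eq_intros)
    from has_derivative_compose[OF this fg]
    have "(g has_derivative (\<lambda>u. gradf (w + t *\<^sub>R d) \<bullet> (u *\<^sub>R d))) (at t)" unfolding g_def .
    moreover have "(\<lambda>u. gradf (w + t *\<^sub>R d) \<bullet> (u *\<^sub>R d)) = (*) (gradf (w + t *\<^sub>R d) \<bullet> d)"
      by (auto simp: fun_eq_iff)
    ultimately show ?thesis by (simp add: has_field_derivative_def)
  qed
  obtain \<tau> where tau: "0 < \<tau>" "\<tau> < 1" "g 1 - g 0 = (1 - 0) * (gradf (w + \<tau> *\<^sub>R d) \<bullet> d)"
    using MVT2[of 0 1 g "\<lambda>t. gradf (w + t *\<^sub>R d) \<bullet> d"] der by auto
  have "(gradf (w + \<tau> *\<^sub>R d) - gradf w) \<bullet> d \<le> norm (gradf (w + \<tau> *\<^sub>R d) - gradf w) * norm d"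
    by (rule norm_cauchy_schwarz)
  also have "\<dots> \<le> (L * norm (\<tau> *\<^sub>R d)) * norm d"
    using lip[of "w + \<tau> *\<^sub>R d" w] by (intro mult_right_mono) auto
  also have "\<dots> = (L * \<tau>) * (norm d * norm d)" using tau by (simp add: mult.assoc)
  also have "\<dots> \<le> L * (norm d * norm d)"
    using tau L by (intro mult_right_mono) (auto simp: mult_left_le)
  also have "\<dots> = L * (norm d)^2" by (simp add: power2_eq_square)
  finally have "gradf (w + \<tau> *\<^sub>R d) \<bullet> d \<le> gradf w \<bullet> d + L * (norm d)^2"
    by (simp add: inner_diff_left)
  then show ?thesis using tau unfolding g_def d_def by simp
qed

lemma closed_fun_sublevel:
  fixes h :: "'a::topological_space \<Rightarrow> ereal"
  assumes "closed_fun h"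
  shows "closed {z. h z \<le> ereal r}"
proof -
  have "{z. h z \<le> ereal r} = (\<lambda>z. (z, r)) -` {(x, s::real). h x \<le> ereal s}" by auto
  moreover have "continuous_on UNIV (\<lambda>z::'a. (z, r))" by (intro continuous_intros)
  ultimately show ?thesis using assms unfolding closed_fun_def
    by (metis closed_vimage)
qed

lemma closed_fun_measurable:
  fixes h :: "'a::{second_countable_topology, topological_space} \<Rightarrow> ereal"
  assumes "closed_fun h" "proper_fun h"
  shows "h \<in> borel_measurable borel"
proof (rule borel_measurableI_le)
  fix y :: ereal
  show "{x \<in> space borel. h x \<le> y} \<in> sets borel"
  proof (cases y)
    case (real r)
    then show ?thesis using closed_fun_sublevel[OF assms(1), of r] by (simp add: borel_closed)
  next
    case PInf then show ?thesis by simp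
  next
    case MInf
    then have "{x \<in> space borel. h x \<le> y} = {}" using assms(2) unfolding proper_fun_def by auto
    then show ?thesis by simp
  qed
qed

lemma caratheodory_meas:
  fixes F :: "'a::euclidean_space \<Rightarrow> 'b \<Rightarrow> real"
  assumes cont: "\<And>s. s \<in> space P \<Longrightarrow> continuous_on UNIV (\<lambda>z. F z s)"
    and meas: "\<And>z. F z \<in> borel_measurable P"
  shows "(\<lambda>p. F (fst p) (snd p)) \<in> borel_measurable (borel \<Otimes>\<^sub>M P)"
proof -
  obtain D :: "'a set" where D: "countable D" "\<And>U. open U \<Longrightarrow> U \<noteq> {} \<Longrightarrow> \<exists>y\<in>D. y \<in> U"
    using countable_dense_exists by blast
  have Dne: "D \<noteq> {}" using D(2)[of UNIV] by auto
  define d where "d = from_nat_into D"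
  have rd: "range d = D" unfolding d_def using Dne D(1) by simp
  have ex: "\<exists>i. dist z (d i) < 1 / Suc n" for z n
  proof -
    obtain y where "y \<in> D" "y \<in> ball z (1 / Suc n)" using D(2)[of "ball z (1 / Suc n)"] by auto
    then show ?thesis using rd by (auto simp: dist_commute)
  qed
  define idx where "idx n z = (LEAST i. dist z (d i) < 1 / Suc n)" for n z
  have idx: "dist z (d (idx n z)) < 1 / Suc n" for n z
    unfolding idx_def by (rule LeastI_ex[OF ex])
  define u where "u n p = F (d (idx n (fst p))) (snd p)" for n p
  have um: "u n \<in> borel_measurable (borel \<Otimes>\<^sub>M P)" for n
  proof -
    have g: "(\<lambda>p. idx n (fst p)) \<in> measurable (borel \<Otimes>\<^sub>M P) (count_space UNIV)"
      unfolding idx_def by measurable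
    have f: "(\<lambda>p. F (d i) (snd p)) \<in> borel_measurable (borel \<Otimes>\<^sub>M P)" for i
    proof -
      have "snd \<in> measurable (borel \<Otimes>\<^sub>M P) P" by (rule measurable_snd)
      from measurable_compose[OF this meas[of "d i"]] show ?thesis by (simp add: comp_def)
    qed
    show ?thesis unfolding u_def
      by (rule measurable_compose_countable[OF f g])
  qed
  have dl: "(\<lambda>n. d (idx n z)) \<longlonglongrightarrow> z" for z
  proof (rule tendstoI)
    fix e :: real assume e: "e > 0"
    obtain N :: nat where N: "1 / Suc N < e" using reals_Archimedean[OF e] by (auto simp: inverse_eq_divide)
    show "eventually (\<lambda>n. dist (d (idx n z)) z < e) sequentially"
    proof (rule eventually_sequentiallyI[of N])
      fix n assume "N \<le> n"
      then have "1 / real (Suc n) \<le> 1 / Suc N" by (simp add: frac_le)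
      then show "dist (d (idx n z)) z < e" using idx[of z n] N by (simp add: dist_commute)
    qed
  qed
  show ?thesis
  proof (rule borel_measurable_LIMSEQ_real[OF _ um])
    fix p :: "'a \<times> 'b" assume p: "p \<in> space (borel \<Otimes>\<^sub>M P)"
    then have "snd p \<in> space P" by (auto simp: space_pair_measure)
    from continuous_on_tendsto_compose[OF cont[OF this] dl[of "fst p"]]
    show "(\<lambda>n. u n p) \<longlonglongrightarrow> F (fst p) (snd p)" unfolding u_def by simp
  qed
qed

lemma grad_joint_meas:
  fixes F :: "'a::euclidean_space \<Rightarrow> 'b \<Rightarrow> real" and gradF :: "'a \<Rightarrow> 'b \<Rightarrow> 'a"
  assumes der: "\<And>z s. s \<in> space P \<Longrightarrow> ((\<lambda>u. F u s) has_derivative (\<lambda>v. gradF z s \<bullet> v)) (at z)"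
    and meas: "\<And>z. F z \<in> borel_measurable P"
  shows "(\<lambda>p. gradF (fst p) (snd p)) \<in> borel_measurable (borel \<Otimes>\<^sub>M P)"
proof -
  have cont: "continuous_on UNIV (\<lambda>z. F z s)" if "s \<in> space P" for s
    using der[OF that] by (meson continuous_at_imp_continuous_on has_derivative_continuous)
  have FJ: "(\<lambda>p. F (fst p) (snd p)) \<in> borel_measurable (borel \<Otimes>\<^sub>M P)"
    by (rule caratheodory_meas[OF cont meas])
  have seq: "filterlim (\<lambda>n. inverse (real (Suc n))) (at 0) sequentially"
    using LIMSEQ_inverse_real_of_nat by (auto simp: filterlim_at)
  have comp: "\<And>b. b \<in> Basis \<Longrightarrow> (\<lambda>p. gradF (fst p) (snd p) \<bullet> b) \<in> borel_measurable (borel \<Otimes>\<^sub>M P)"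
  proof -
    fix b :: 'a assume b: "b \<in> Basis"
    define v where "v n p = (F (fst p + inverse (real (Suc n)) *\<^sub>R b) (snd p) - F (fst p) (snd p)) / inverse (real (Suc n))" for n p
    have vm: "v n \<in> borel_measurable (borel \<Otimes>\<^sub>M P)" for n
    proof -
      have sh: "(\<lambda>p. (fst p + inverse (real (Suc n)) *\<^sub>R b, snd p)) \<in> measurable (borel \<Otimes>\<^sub>M P) (borel \<Otimes>\<^sub>M P)"
        by measurable
      have "(\<lambda>p. F (fst p + inverse (real (Suc n)) *\<^sub>R b) (snd p)) \<in> borel_measurable (borel \<Otimes>\<^sub>M P)"
        using measurable_compose[OF sh FJ] by simp
      then show ?thesis unfolding v_def using FJ by measurable
    qed
    show "(\<lambda>p. gradF (fst p) (snd p) \<bullet> b) \<in> borel_measurable (borel \<Otimes>\<^sub>M P)"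
    proof (rule borel_measurable_LIMSEQ_real[OF _ vm])
      fix p :: "'a \<times> 'b" assume p: "p \<in> space (borel \<Otimes>\<^sub>M P)"
      then have s: "snd p \<in> space P" by (auto simp: space_pair_measure)
      define z where "z = fst p"
      have "((\<lambda>t. z + t *\<^sub>R b) has_derivative (\<lambda>u. u *\<^sub>R b)) (at 0)"
        by (auto intro!: derivative_eq_intros)
      from has_derivative_compose[OF this der[OF s, of "z + 0 *\<^sub>R b"]]
      have "((\<lambda>t. F (z + t *\<^sub>R b) (snd p)) has_derivative (\<lambda>u. gradF z (snd p) \<bullet> (u *\<^sub>R b))) (at 0)"
        by simp
      moreover have "(\<lambda>u. gradF z (snd p) \<bullet> (u *\<^sub>R b)) = (*) (gradF z (snd p) \<bullet> b)"
        by (auto simp: fun_eq_iff)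
      ultimately have "DERIV (\<lambda>t. F (z + t *\<^sub>R b) (snd p)) 0 :> gradF z (snd p) \<bullet> b"
        by (simp add: has_field_derivative_def)
      then have "((\<lambda>t. (F (z + t *\<^sub>R b) (snd p) - F z (snd p)) / t) \<longlongrightarrow> gradF z (snd p) \<bullet> b) (at 0)"
        unfolding DERIV_def by simp
      from filterlim_compose[OF this seq]
      show "(\<lambda>n. v n p) \<longlonglongrightarrow> gradF (fst p) (snd p) \<bullet> b" unfolding v_def z_def by simp
    qed
  qed
  then show ?thesis by (subst borel_measurable_euclidean_space) auto
qed

lemma freeze_zero:
  fixes \<Phi> :: "'w \<times> 'b \<Rightarrow> real"
  assumes M: "prob_space M" and sub: "subalgebra M H"
    and X: "X \<in> measurable M S" and XS: "distr M S X = S"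
    and ind: "\<And>A B. A \<in> sets H \<Longrightarrow> B \<in> sets S \<Longrightarrow>
        measure M (A \<inter> (X -` B \<inter> space M)) = measure M A * measure M (X -` B \<inter> space M)"
    and Phi: "\<Phi> \<in> borel_measurable (H \<Otimes>\<^sub>M S)"
    and int: "integrable M (\<lambda>\<omega>. \<Phi> (\<omega>, X \<omega>))"
    and inner0: "\<And>\<omega>. \<omega> \<in> space M \<Longrightarrow> (\<integral>s. \<Phi> (\<omega>, s) \<partial>S) = 0"
  shows "(\<integral>\<omega>. \<Phi> (\<omega>, X \<omega>) \<partial>M) = 0"
proof -
  interpret M: prob_space M by fact
  define MH where "MH = restr_to_subalg M H"
  have MHp: "prob_space MH" unfolding MH_def by (rule prob_space_restr_to_subalg[OF sub M])
  have sMH: "sets MH = sets H" unfolding MH_def by (rule sets_restr_to_subalg[OF sub])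
  have spMH: "space MH = space M" unfolding MH_def by (rule space_restr_to_subalg)
  have Sp: "prob_space S" using M.prob_space_distr[OF X] XS by simp
  interpret MH: prob_space MH by fact
  interpret S: prob_space S by fact
  interpret PS: pair_sigma_finite MH S ..
  have idm: "(\<lambda>\<omega>. \<omega>) \<in> measurable M MH"
  proof (rule measurableI)
    fix A assume "A \<in> sets MH"
    then have "A \<in> sets M" using sub sMH unfolding subalgebra_def by auto
    then show "(\<lambda>\<omega>. \<omega>) -` A \<inter> space M \<in> sets M" by simp
  qed (simp add: spMH)
  have pm: "(\<lambda>\<omega>. (\<omega>, X \<omega>)) \<in> measurable M (MH \<Otimes>\<^sub>M S)"
    using idm X by (rule measurable_Pair)
  have sPhi: "\<Phi> \<in> borel_measurable (MH \<Otimes>\<^sub>M S)"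
    using Phi by (simp add: measurable_def space_pair_measure sMH spMH sets_pair_measure_cong[OF sMH refl]
        sub[unfolded subalgebra_def])
  have eq: "MH \<Otimes>\<^sub>M S = distr M (MH \<Otimes>\<^sub>M S) (\<lambda>\<omega>. (\<omega>, X \<omega>))"
  proof (rule pair_measure_eqI)
    show "sigma_finite_measure MH" "sigma_finite_measure S" by unfold_locales
    show "sets (MH \<Otimes>\<^sub>M S) = sets (distr M (MH \<Otimes>\<^sub>M S) (\<lambda>\<omega>. (\<omega>, X \<omega>)))" by simp
    fix A B assume A: "A \<in> sets MH" and B: "B \<in> sets S"
    have AM: "A \<in> sets M" using A sub sMH unfolding subalgebra_def by auto
    have AB: "A \<times> B \<in> sets (MH \<Otimes>\<^sub>M S)" using A B by simp
    have XB: "X -` B \<inter> space M \<in> sets M" using X B by (simp add: measurable_def)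
    have pre: "(\<lambda>\<omega>. (\<omega>, X \<omega>)) -` (A \<times> B) \<inter> space M = A \<inter> (X -` B \<inter> space M)" by auto
    have "emeasure (distr M (MH \<Otimes>\<^sub>M S) (\<lambda>\<omega>. (\<omega>, X \<omega>))) (A \<times> B) = emeasure M (A \<inter> (X -` B \<inter> space M))"
      using emeasure_distr[OF pm AB] pre by simp
    also have "\<dots> = ennreal (measure M A * measure M (X -` B \<inter> space M))"
      using ind[OF A[unfolded sMH] B] AM XB by (simp add: M.emeasure_eq_measure)
    also have "\<dots> = emeasure M A * emeasure M (X -` B \<inter> space M)"
      by (simp add: M.emeasure_eq_measure ennreal_mult)
    also have "emeasure M A = emeasure MH A"
      unfolding MH_def using emeasure_restr_to_subalg[OF sub A[unfolded sMH]] by simp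
    also have "emeasure M (X -` B \<inter> space M) = emeasure S B"
      using emeasure_distr[OF X B] XS by simp
    finally show "emeasure MH A * emeasure S B = emeasure (distr M (MH \<Otimes>\<^sub>M S) (\<lambda>\<omega>. (\<omega>, X \<omega>))) (A \<times> B)" by simp
  qed
  have "integrable (distr M (MH \<Otimes>\<^sub>M S) (\<lambda>\<omega>. (\<omega>, X \<omega>))) \<Phi>"
    by (subst integrable_distr_eq[OF pm sPhi]) (rule int)
  then have intP: "integrable (MH \<Otimes>\<^sub>M S) \<Phi>" by (simp only: eq[symmetric])
  have "(\<integral>\<omega>. \<Phi> (\<omega>, X \<omega>) \<partial>M) = integral\<^sup>L (distr M (MH \<Otimes>\<^sub>M S) (\<lambda>\<omega>. (\<omega>, X \<omega>))) \<Phi>"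
    by (rule integral_distr[OF pm sPhi, symmetric])
  also have "\<dots> = integral\<^sup>L (MH \<Otimes>\<^sub>M S) \<Phi>" by (simp only: eq[symmetric])
  also have "\<dots> = (\<integral>\<omega>. (\<integral>s. \<Phi> (\<omega>, s) \<partial>S) \<partial>MH)"
    by (rule PS.integral_fst'[OF intP, symmetric])
  also have "\<dots> = (\<integral>\<omega>. 0 \<partial>MH)"
    by (rule Bochner_Integration.integral_cong) (auto simp: spMH inner0)
  finally show ?thesis by simp
qed

lemma space_gen_sigma[simp]: "space (gen_sigma M Xs) = space M"
  unfolding gen_sigma_def by (simp add: space_measure_of_conv)

lemma sets_gen_sigma: "sets (gen_sigma M Xs) = sigma_sets (space M) (\<Union>X\<in>Xs. {X -` A \<inter> space M | A. A \<in> sets borel})"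
  unfolding gen_sigma_def by (rule sets_measure_of) auto

lemma gen_sigma_sub:
  assumes "\<And>X. X \<in> Xs \<Longrightarrow> X \<in> borel_measurable M"
  shows "subalgebra M (gen_sigma M Xs)"
  unfolding subalgebra_def
proof
  show "space (gen_sigma M Xs) = space M" by simp
  have "(\<Union>X\<in>Xs. {X -` A \<inter> space M | A. A \<in> sets borel}) \<subseteq> sets M"
    using assms by (auto simp: measurable_def)
  then show "sets (gen_sigma M Xs) \<subseteq> sets M"
    unfolding sets_gen_sigma by (rule sets.sigma_sets_subset)
qed

lemma gen_sigma_meas:
  assumes "X \<in> Xs"
  shows "X \<in> borel_measurable (gen_sigma M Xs)"
proof (rule measurableI)
  fix A :: "'b set" assume "A \<in> sets borel"
  then have "X -` A \<inter> space M \<in> (\<Union>X\<in>Xs. {X -` A \<inter> space M | A. A \<in> sets borel})"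
    using assms by auto
  then show "X -` A \<inter> space (gen_sigma M Xs) \<in> sets (gen_sigma M Xs)"
    unfolding sets_gen_sigma by (auto intro: sigma_sets.Basic)
qed simp

lemma gen_sigma_mono:
  assumes "Xs \<subseteq> Ys"
  shows "sets (gen_sigma M Xs) \<subseteq> sets (gen_sigma M Ys)"
  unfolding sets_gen_sigma by (rule sigma_sets_subseteq) (use assms in auto)

locale setting =
  fixes f :: "'a::euclidean_space \<Rightarrow> real" and gradf :: "'a \<Rightarrow> 'a"
    and h :: "'a \<Rightarrow> ereal" and L :: real
    and P :: "'b measure" and F :: "'a \<Rightarrow> 'b \<Rightarrow> real" and gradF :: "'a \<Rightarrow> 'b \<Rightarrow> 'a"
    and M :: "'w measure"
    and x :: "nat \<Rightarrow> 'w \<Rightarrow> 'a" and g :: "nat \<Rightarrow> 'w \<Rightarrow> 'a"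
    and \<xi> :: "nat \<Rightarrow> nat \<Rightarrow> 'w \<Rightarrow> 'b" and N :: "nat \<Rightarrow> 'w \<Rightarrow> nat"
    and G :: "nat \<Rightarrow> 'w measure"
    and x0 :: 'a and \<alpha> \<sigma> \<eta> \<iota>0 :: real and \<delta> :: "nat \<Rightarrow> real"
  assumes G_def: "G = (\<lambda>k. gen_sigma M (insert (x 0) (g ` {..<k})))"
  and L_pos: "L > 0"
    and f_grad: "\<And>z. (f has_derivative (\<lambda>v. gradf z \<bullet> v)) (at z)"
    and gradf_lip: "\<And>z w. norm (gradf z - gradf w) \<le> L * norm (z - w)"
    and h_closed: "closed_fun h" and h_convex: "convex_fun h" and h_proper: "proper_fun h"
    and phi_bdd: "\<exists>m::real. \<forall>z. ereal m \<le> ereal (f z) + h z"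
    and P_prob: "prob_space P"
    and F_int: "\<And>z. integrable P (F z)"
    and F_grad: "\<And>z s. s \<in> space P \<Longrightarrow> ((\<lambda>u. F u s) has_derivative (\<lambda>v. gradF z s \<bullet> v)) (at z)"
    and gradF_int: "\<And>z. integrable P (gradF z)"
    and gradf_exp: "\<And>z. gradf z = (\<integral>s. gradF z s \<partial>P)"
    and M_prob: "prob_space M"
    and g_meas: "\<And>k. g k \<in> borel_measurable M"
    and x_meas: "\<And>k. x k \<in> borel_measurable M"
    and \<xi>_meas: "\<And>k i. \<xi> k i \<in> measurable M P"
    and \<xi>_distr: "\<And>k i. distr M P (\<xi> k i) = P"
    and \<xi>_indep: "\<And>k. prob_space.indep_sets M
        (\<lambda>j. case j of None \<Rightarrow> sets (G k)
                     | Some i \<Rightarrow> {\<xi> k i -` A \<inter> space M | A. A \<in> sets P}) UNIV"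
    and sigma_nonneg: "\<sigma> \<ge> 0"
    and assmV: "\<And>k i. AE \<omega> in M. nn_cond_exp M (G k)
        (\<lambda>\<omega>'. ennreal ((norm (gradF (x k \<omega>') (\<xi> k i \<omega>') - gradf (x k \<omega>'))) ^ 2)) \<omega>
        \<le> ennreal (\<sigma> ^ 2)"
    and eta: "0 < \<eta>" "\<eta> < 1"
    and iota: "0 \<le> \<iota>0"
    and alpha: "\<alpha> > 0" "\<alpha> \<le> (1 - \<eta>) / (2 * L)"
    and x_init: "\<And>\<omega>. \<omega> \<in> space M \<Longrightarrow> x 0 \<omega> = x0"
    and x_step: "\<And>k \<omega>. \<omega> \<in> space M \<Longrightarrow> x (Suc k) \<omega> = prox \<alpha> h (x k \<omega> - \<alpha> *\<^sub>R g k \<omega>)"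
    and R_int: "\<And>k. integrable M (\<lambda>\<omega>. (1 / \<alpha>) *\<^sub>R (x k \<omega> - x (Suc k) \<omega>))"
    and sample_rule: "\<And>k. AE \<omega> in M.
        (let D = \<eta>^2 / 4 * (norm (vcond_exp M (G k) (\<lambda>\<omega>'. (1 / \<alpha>) *\<^sub>R (x k \<omega>' - x (Suc k) \<omega>')) \<omega>))^2
                 + \<iota>0^2 * (\<delta> k)^2
         in (D > 0 \<longrightarrow> N k \<omega> = max 1 (nat \<lceil>\<sigma>^2 / D\<rceil>)
                       \<and> g k \<omega> = (1 / real (N k \<omega>)) *\<^sub>R (\<Sum>i<N k \<omega>. gradF (x k \<omega>) (\<xi> k i \<omega>)))
          \<and> (D = 0 \<longrightarrow> g k \<omega> = gradf (x k \<omega>)))"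
    and delta_sq: "summable (\<lambda>k. (\<delta> k)^2)"
begin

interpretation Mp: prob_space M by (rule M_prob)

lemma aL: "2 * \<alpha> * L \<le> 1 - \<eta>"
  using alpha L_pos by (simp add: field_simps)

lemma L_lt: "L < 1 / (2 * \<alpha>)"
  using aL alpha eta by (simp add: field_simps)

definition mlow :: real where "mlow = (SOME m. \<forall>z. ereal m \<le> ereal (f z) + h z)"

lemma mlow: "ereal mlow \<le> ereal (f z) + h z"
  using someI_ex[OF phi_bdd] unfolding mlow_def by blast

lemma h_ninf: "h z \<noteq> -\<infinity>" using h_proper unfolding proper_fun_def by auto

lemma descent: "f z \<le> f w + gradf w \<bullet> (z - w) + L * (norm (z - w))^2"
  by (rule descent_lemma[OF f_grad gradf_lip]) (use L_pos in simp)

lemma h_lb: "ereal (mlow - f y - norm (gradf y) * norm (z - y) - L * (norm (z - y))^2) \<le> h z"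
proof -
  have d: "f z \<le> f y + gradf y \<bullet> (z - y) + L * (norm (z - y))^2" by (rule descent)
  have "gradf y \<bullet> (z - y) \<le> norm (gradf y) * norm (z - y)" by (rule norm_cauchy_schwarz)
  with d have "mlow - f y - norm (gradf y) * norm (z - y) - L * (norm (z - y))^2 \<le> mlow - f z" by linarith
  moreover have "ereal (mlow - f z) \<le> h z"
    using mlow[of z] h_ninf[of z] by (cases "h z") auto
  ultimately show ?thesis by (meson ereal_less_eq(3) order_trans)
qed

definition pr :: "'a \<Rightarrow> 'a" where "pr y = prox \<alpha> h y"

lemma pmin: "h (pr y) + ereal ((norm (pr y - y))^2 / (2 * \<alpha>)) \<le> h w + ereal ((norm (w - y))^2 / (2 * \<alpha>))"
proof -
  have ex: "\<exists>p. \<forall>w. h p + ereal ((norm (p - y))^2 / (2 * \<alpha>)) \<le> h w + ereal ((norm (w - y))^2 / (2 * \<alpha>))"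
    by (rule prox_exists[OF h_proper h_closed alpha(1) h_lb _ L_lt]) simp
  show ?thesis using someI_ex[OF ex] unfolding pr_def prox_def by blast
qed

lemma pfin: "h (pr y) \<noteq> \<infinity>"
proof -
  obtain w where "h w \<noteq> \<infinity>" using h_proper unfolding proper_fun_def by auto
  then show ?thesis using prox_vi(1)[OF h_convex h_proper alpha(1) pmin] by blast
qed

lemma pvi: "h w \<noteq> \<infinity> \<Longrightarrow> h (pr y) + ereal (((y - pr y) \<bullet> (w - pr y)) / \<alpha>) \<le> h w"
  by (rule prox_vi(2)[OF h_convex h_proper alpha(1) pmin])

lemma pne: "norm (pr y1 - pr y2) \<le> norm (y1 - y2)"
  by (rule prox_nonexp_aux[OF h_convex h_proper alpha(1) pmin pmin pfin pfin])

lemma pcont: "continuous_on UNIV pr"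
  unfolding continuous_on_iff
proof (intro ballI allI impI)
  fix y :: 'a and e :: real assume "e > 0"
  then show "\<exists>d>0. \<forall>y'\<in>UNIV. dist y' y < d \<longrightarrow> dist (pr y') (pr y) < e"
    using pne by (intro exI[of _ e]) (auto simp: dist_norm intro: le_less_trans)
qed

lemma pmeas[measurable]: "pr \<in> borel_measurable borel"
  by (rule borel_measurable_continuous_onI[OF pcont])

lemma h_meas[measurable]: "h \<in> borel_measurable borel"
  by (rule closed_fun_measurable[OF h_closed h_proper])

definition hr :: "'a \<Rightarrow> real" where "hr z = real_of_ereal (h z)"

lemma hr_meas[measurable]: "hr \<in> borel_measurable borel"
  unfolding hr_def by measurable

lemma hr_eq: "h z \<noteq> \<infinity> \<Longrightarrow> h z = ereal (hr z)"
  unfolding hr_def using h_ninf[of z] by (cases "h z") auto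

lemma phi_lb: "h z \<noteq> \<infinity> \<Longrightarrow> mlow \<le> f z + hr z"
  using mlow[of z] hr_eq[of z] by simp

lemma f_cont: "continuous_on UNIV f"
  using f_grad by (meson continuous_at_imp_continuous_on has_derivative_continuous)

lemma f_meas[measurable]: "f \<in> borel_measurable borel"
  by (rule borel_measurable_continuous_onI[OF f_cont])

lemma gradf_cont: "continuous_on UNIV gradf"
  unfolding continuous_on_iff
proof (intro ballI allI impI)
  fix y :: 'a and e :: real assume e: "e > 0"
  show "\<exists>d>0. \<forall>y'\<in>UNIV. dist y' y < d \<longrightarrow> dist (gradf y') (gradf y) < e"
  proof (intro exI[of _ "e / L"] conjI ballI impI)
    show "e / L > 0" using e L_pos by simp
    fix y' assume "dist y' y < e / L"
    then have "L * dist y' y < e" using L_pos by (simp add: field_simps)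
    moreover have "dist (gradf y') (gradf y) \<le> L * dist y' y"
      using gradf_lip[of y' y] by (simp add: dist_norm)
    ultimately show "dist (gradf y') (gradf y) < e" by linarith
  qed
qed

lemma gradf_meas[measurable]: "gradf \<in> borel_measurable borel"
  by (rule borel_measurable_continuous_onI[OF gradf_cont])

lemma step_ineq:
  assumes hx: "h z \<noteq> \<infinity>"
  shows "f (pr (z - \<alpha> *\<^sub>R v)) + hr (pr (z - \<alpha> *\<^sub>R v)) + (1 / \<alpha> - L) * (norm (z - pr (z - \<alpha> *\<^sub>R v)))^2
     \<le> f z + hr z + norm (gradf z - v) * norm (z - pr (z - \<alpha> *\<^sub>R v))"
proof -
  define p where "p = pr (z - \<alpha> *\<^sub>R v)"
  define d where "d = z - p"
  have vi: "h p + ereal (((z - \<alpha> *\<^sub>R v - p) \<bullet> (z - p)) / \<alpha>) \<le> h z"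
    unfolding p_def by (rule pvi[OF hx])
  then have vi': "hr p + ((z - \<alpha> *\<^sub>R v - p) \<bullet> (z - p)) / \<alpha> \<le> hr z"
    using hr_eq[OF hx] hr_eq[OF pfin[of "z - \<alpha> *\<^sub>R v"]] unfolding p_def by simp
  have e1: "((z - \<alpha> *\<^sub>R v - p) \<bullet> (z - p)) / \<alpha> = (norm d)^2 / \<alpha> - v \<bullet> d"
  proof -
    have "(z - \<alpha> *\<^sub>R v - p) \<bullet> (z - p) = (norm d)^2 - \<alpha> * (v \<bullet> d)"
      unfolding d_def by (simp add: power2_norm_eq_inner inner_diff_left inner_diff_right algebra_simps)
    then show ?thesis using alpha(1) by (simp add: diff_divide_distrib)
  qed
  have de: "f p \<le> f z + gradf z \<bullet> (p - z) + L * (norm (p - z))^2" by (rule descent)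
  have e2: "gradf z \<bullet> (p - z) = - (gradf z \<bullet> d)" unfolding d_def by (simp add: inner_diff_right)
  have e3: "norm (p - z) = norm d" unfolding d_def by (simp add: norm_minus_commute)
  have cs: "- ((gradf z - v) \<bullet> d) \<le> norm (gradf z - v) * norm d"
    using norm_cauchy_schwarz[of "v - gradf z" d] by (simp add: norm_minus_commute inner_diff_left)
  have e4: "(gradf z - v) \<bullet> d = gradf z \<bullet> d - v \<bullet> d" by (simp add: inner_diff_left)
  have e5: "(1 / \<alpha> - L) * (norm d)^2 = (norm d)^2 / \<alpha> - L * (norm d)^2" by (simp add: algebra_simps)
  have de': "f p \<le> f z - gradf z \<bullet> d + L * (norm d)^2" using de unfolding e2 e3 by simp
  have vi'': "hr p + ((norm d)^2 / \<alpha> - v \<bullet> d) \<le> hr z" using vi' unfolding e1 .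
  show ?thesis unfolding p_def[symmetric] d_def[symmetric] e5
    using vi'' de' cs e4 by linarith
qed

end

context setting
begin

interpretation Mp: prob_space M by (rule M_prob)

definition "Rv k \<omega> = (1 / \<alpha>) *\<^sub>R (x k \<omega> - x (Suc k) \<omega>)"
definition "Tv k \<omega> = (1 / \<alpha>) *\<^sub>R (x k \<omega> - pr (x k \<omega> - \<alpha> *\<^sub>R gradf (x k \<omega>)))"
definition "erv k \<omega> = gradf (x k \<omega>) - g k \<omega>"
definition "Vv k = vcond_exp M (G k) (Rv k)"
definition "Dv k \<omega> = \<eta>^2 / 4 * (norm (Vv k \<omega>))^2 + \<iota>0^2 * (\<delta> k)^2"
definition "Nm k \<omega> = max 1 (nat \<lceil>\<sigma>^2 / Dv k \<omega>\<rceil>)"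
definition "wv k \<omega> = (if Dv k \<omega> > 0 then \<sigma>^2 / real (Nm k \<omega>) else 0)"

lemma gens_meas: "X \<in> insert (x 0) (g ` {..<k}) \<Longrightarrow> X \<in> borel_measurable M"
  using x_meas g_meas by auto

lemma Gsub: "subalgebra M (G k)"
  unfolding G_def by (rule gen_sigma_sub) (rule gens_meas)

lemma space_G[simp]: "space (G k) = space M"
  unfolding G_def by simp

lemma G_mono: "k \<le> l \<Longrightarrow> sets (G k) \<subseteq> sets (G l)"
  unfolding G_def by (rule gen_sigma_mono) auto

lemma G_sub_sets: "sets (G k) \<subseteq> sets M"
  using Gsub[of k] unfolding subalgebra_def by auto

lemma subalg_GG: "k \<le> l \<Longrightarrow> subalgebra (G l) (G k)"
  unfolding subalgebra_def using G_mono by auto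

lemma gG: "g k \<in> borel_measurable (G (Suc k))"
  unfolding G_def by (rule gen_sigma_meas) auto

lemma xG[measurable]: "x k \<in> borel_measurable (G k)"
proof (induction k)
  case 0
  show ?case unfolding G_def by (rule gen_sigma_meas) auto
next
  case (Suc k)
  have xk: "x k \<in> borel_measurable (G (Suc k))"
    by (rule measurable_from_subalg[OF subalg_GG Suc]) simp
  have gk: "g k \<in> borel_measurable (G (Suc k))" by (rule gG)
  have "(\<lambda>\<omega>. pr (x k \<omega> - \<alpha> *\<^sub>R g k \<omega>)) \<in> borel_measurable (G (Suc k))"
    using xk gk by measurable
  then show ?case
    by (rule measurable_cong[THEN iffD1, rotated]) (simp add: x_step pr_def)
qed

lemma xM[measurable]: "x k \<in> borel_measurable M" by (rule x_meas)
lemma gM[measurable]: "g k \<in> borel_measurable M" by (rule g_meas)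

lemma Rv_meas[measurable]: "Rv k \<in> borel_measurable M"
  unfolding Rv_def by measurable

lemma Tv_G[measurable]: "Tv k \<in> borel_measurable (G k)"
  unfolding Tv_def by measurable

lemma Tv_meas[measurable]: "Tv k \<in> borel_measurable M"
  by (rule measurable_from_subalg[OF Gsub Tv_G])

lemma erv_meas[measurable]: "erv k \<in> borel_measurable M"
  unfolding erv_def by measurable

lemma Vv_G[measurable]: "Vv k \<in> borel_measurable (G k)"
  unfolding Vv_def vcond_exp_def by measurable

lemma Vv_meas[measurable]: "Vv k \<in> borel_measurable M"
  by (rule measurable_from_subalg[OF Gsub Vv_G])

lemma Dv_G[measurable]: "Dv k \<in> borel_measurable (G k)"
  unfolding Dv_def by measurable

lemma Nm_G[measurable]: "Nm k \<in> measurable (G k) (count_space UNIV)"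
  unfolding Nm_def by measurable

lemma Nm_real_G[measurable]: "(\<lambda>\<omega>. real (Nm k \<omega>)) \<in> borel_measurable (G k)"
  by measurable

lemma wv_G[measurable]: "wv k \<in> borel_measurable (G k)"
  unfolding wv_def by measurable

lemma Dv_nonneg: "Dv k \<omega> \<ge> 0" unfolding Dv_def using eta by simp

lemma Nm_ge1: "Nm k \<omega> \<ge> 1" unfolding Nm_def by simp

lemma wv_nonneg: "wv k \<omega> \<ge> 0" unfolding wv_def by simp

lemma wv_le_sigma: "wv k \<omega> \<le> \<sigma>^2"
proof -
  have "real (Nm k \<omega>) \<ge> 1" using Nm_ge1[of k \<omega>] by simp
  then have "\<sigma>^2 * 1 \<le> \<sigma>^2 * real (Nm k \<omega>)" by (intro mult_left_mono) auto
  then have "\<sigma>^2 / real (Nm k \<omega>) \<le> \<sigma>^2" using \<open>real (Nm k \<omega>) \<ge> 1\<close> by (simp add: divide_le_eq)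
  then show ?thesis unfolding wv_def by simp
qed

lemma wv_le_D: "wv k \<omega> \<le> Dv k \<omega>"
proof (cases "Dv k \<omega> > 0")
  case True
  define q where "q = \<sigma>^2 / Dv k \<omega>"
  have a1: "q \<le> of_int \<lceil>q\<rceil>" by (rule le_of_int_ceiling)
  have a2: "(of_int \<lceil>q\<rceil> :: real) \<le> real (nat \<lceil>q\<rceil>)" by simp
  have a3: "real (nat \<lceil>q\<rceil>) \<le> real (Nm k \<omega>)" unfolding Nm_def q_def by simp
  have "real (Nm k \<omega>) \<ge> \<sigma>^2 / Dv k \<omega>" using a1 a2 a3 unfolding q_def by linarith
  then have "\<sigma>^2 \<le> real (Nm k \<omega>) * Dv k \<omega>" using True by (simp add: divide_le_eq mult.commute)
  moreover have "real (Nm k \<omega>) > 0" using Nm_ge1[of k \<omega>] by simp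
  ultimately have "\<sigma>^2 / real (Nm k \<omega>) \<le> Dv k \<omega>" by (simp add: divide_le_eq mult.commute)
  then show ?thesis unfolding wv_def using True by simp
qed (simp add: wv_def Dv_nonneg)

lemma Nm_le: "Dv k \<omega> > 0 \<Longrightarrow> real (Nm k \<omega>) \<le> 1 + \<sigma>^2 / Dv k \<omega>"
proof -
  assume D: "Dv k \<omega> > 0"
  define q where "q = \<sigma>^2 / Dv k \<omega>"
  have q0: "q \<ge> 0" using D unfolding q_def by simp
  then have c0: "\<lceil>q\<rceil> \<ge> 0" by simp
  have "real (nat \<lceil>q\<rceil>) = of_int \<lceil>q\<rceil>" using c0 by simp
  also have "\<dots> \<le> q + 1" by (rule of_int_ceiling_le_add_one)
  finally have "real (nat \<lceil>\<sigma>^2 / Dv k \<omega>\<rceil>) \<le> 1 + \<sigma>^2 / Dv k \<omega>" unfolding q_def by simp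
  then show ?thesis unfolding Nm_def using D by (auto simp: max_def)
qed

lemma h_x_fin: "\<omega> \<in> space M \<Longrightarrow> h (x (Suc k) \<omega>) \<noteq> \<infinity>"
  using x_step pfin unfolding pr_def by simp

lemma TR_le_e: "\<omega> \<in> space M \<Longrightarrow> norm (Tv k \<omega> - Rv k \<omega>) \<le> norm (erv k \<omega>)"
proof -
  assume \<omega>: "\<omega> \<in> space M"
  have "Tv k \<omega> - Rv k \<omega> = (1 / \<alpha>) *\<^sub>R (x (Suc k) \<omega> - pr (x k \<omega> - \<alpha> *\<^sub>R gradf (x k \<omega>)))"
    unfolding Tv_def Rv_def by (simp add: algebra_simps)
  also have "x (Suc k) \<omega> = pr (x k \<omega> - \<alpha> *\<^sub>R g k \<omega>)" using x_step[OF \<omega>] by (simp add: pr_def)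
  finally have eq: "norm (Tv k \<omega> - Rv k \<omega>) = (1 / \<alpha>) * norm (pr (x k \<omega> - \<alpha> *\<^sub>R g k \<omega>) - pr (x k \<omega> - \<alpha> *\<^sub>R gradf (x k \<omega>)))"
    using alpha(1) by simp
  have "norm (pr (x k \<omega> - \<alpha> *\<^sub>R g k \<omega>) - pr (x k \<omega> - \<alpha> *\<^sub>R gradf (x k \<omega>))) \<le> norm ((x k \<omega> - \<alpha> *\<^sub>R g k \<omega>) - (x k \<omega> - \<alpha> *\<^sub>R gradf (x k \<omega>)))"
    by (rule pne)
  also have "(x k \<omega> - \<alpha> *\<^sub>R g k \<omega>) - (x k \<omega> - \<alpha> *\<^sub>R gradf (x k \<omega>)) = \<alpha> *\<^sub>R erv k \<omega>"
    unfolding erv_def by (simp add: algebra_simps)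
  finally have "norm (pr (x k \<omega> - \<alpha> *\<^sub>R g k \<omega>) - pr (x k \<omega> - \<alpha> *\<^sub>R gradf (x k \<omega>))) \<le> \<alpha> * norm (erv k \<omega>)"
    using alpha(1) by simp
  then show ?thesis unfolding eq using alpha(1) by (simp add: field_simps)
qed

end

lemma (in prob_space) integrable_bdd:
  fixes f :: "'a \<Rightarrow> real"
  assumes "f \<in> borel_measurable M" "\<And>\<omega>. \<omega> \<in> space M \<Longrightarrow> \<bar>f \<omega>\<bar> \<le> c"
  shows "integrable M f"
  by (rule Bochner_Integration.integrable_bound[where f="\<lambda>_. c"]) (use assms in \<open>auto intro!: AE_I2 intro: order_trans[OF _ abs_ge_self]\<close>)

lemma (in prob_space) integrable_bdd_mult:
  fixes f g :: "'a \<Rightarrow> real"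
  assumes g: "integrable M g" and f: "f \<in> borel_measurable M" and b: "\<And>\<omega>. \<omega> \<in> space M \<Longrightarrow> \<bar>f \<omega>\<bar> \<le> c"
  shows "integrable M (\<lambda>\<omega>. f \<omega> * g \<omega>)"
proof (rule Bochner_Integration.integrable_bound[where f="\<lambda>\<omega>. \<bar>c\<bar> * g \<omega>"])
  show "integrable M (\<lambda>\<omega>. \<bar>c\<bar> * g \<omega>)" using g by simp
  show "(\<lambda>\<omega>. f \<omega> * g \<omega>) \<in> borel_measurable M" using f g by measurable
  show "AE \<omega> in M. norm (f \<omega> * g \<omega>) \<le> norm (\<bar>c\<bar> * g \<omega>)"
  proof (rule AE_I2)
    fix \<omega> assume "\<omega> \<in> space M"
    then have "\<bar>f \<omega>\<bar> \<le> \<bar>c\<bar>" using b by force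
    then show "norm (f \<omega> * g \<omega>) \<le> norm (\<bar>c\<bar> * g \<omega>)"
      by (simp add: abs_mult mult_right_mono)
  qed
qed

lemma inner_le_sq: "\<bar>(a::'a::real_inner) \<bullet> b\<bar> \<le> ((norm a)^2 + (norm b)^2) / 2"
proof -
  have "\<bar>a \<bullet> b\<bar> \<le> norm a * norm b" by (rule Cauchy_Schwarz_ineq2)
  also have "\<dots> \<le> ((norm a)^2 + (norm b)^2) / 2"
    using sum_squares_bound[of "norm a" "norm b"] by (simp add: power2_eq_square field_simps)
  finally show ?thesis .
qed

context setting
begin

interpretation Mp: prob_space M by (rule M_prob)

lemma sfs: "sigma_finite_subalgebra M (G k)"
proof (rule finite_measure_subalgebra_is_sigma_finite)
  show "finite_measure_subalgebra M (G k)"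
    unfolding finite_measure_subalgebra_def finite_measure_subalgebra_axioms_def
    using Mp.finite_measure_axioms Gsub by simp
qed

lemma vproj:
  fixes X :: "'w \<Rightarrow> 'a" and W :: "'w \<Rightarrow> 'a"
  assumes X: "integrable M X" and W: "W \<in> borel_measurable (G k)"
    and Wb: "\<And>\<omega>. \<omega> \<in> space M \<Longrightarrow> norm (W \<omega>) \<le> c"
  shows "integrable M (\<lambda>\<omega>. W \<omega> \<bullet> vcond_exp M (G k) X \<omega>)"
    "(\<integral>\<omega>. W \<omega> \<bullet> vcond_exp M (G k) X \<omega> \<partial>M) = (\<integral>\<omega>. W \<omega> \<bullet> X \<omega> \<partial>M)"
proof -
  interpret S: sigma_finite_subalgebra M "G k" by (rule sfs)
  have WM[measurable]: "W \<in> borel_measurable M" by (rule measurable_from_subalg[OF Gsub W])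
  have XM[measurable]: "X \<in> borel_measurable M" using X by auto
  have Wb': "\<bar>W \<omega> \<bullet> b\<bar> \<le> c" if "\<omega> \<in> space M" "b \<in> Basis" for \<omega> b
    using Basis_le_norm[OF that(2), of "W \<omega>"] Wb[OF that(1)] by linarith
  have WbG: "(\<lambda>\<omega>. W \<omega> \<bullet> b) \<in> borel_measurable (G k)" for b using W by measurable
  have Xb: "integrable M (\<lambda>\<omega>. X \<omega> \<bullet> b)" for b using X by simp
  have fg: "integrable M (\<lambda>\<omega>. (W \<omega> \<bullet> b) * (X \<omega> \<bullet> b))" if "b \<in> Basis" for b
    by (rule Mp.integrable_bdd_mult[OF Xb]) (use Wb' that in auto)
  have rce: "integrable M (\<lambda>\<omega>. (W \<omega> \<bullet> b) * real_cond_exp M (G k) (\<lambda>\<omega>. X \<omega> \<bullet> b) \<omega>)"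
     "(\<integral>\<omega>. (W \<omega> \<bullet> b) * real_cond_exp M (G k) (\<lambda>\<omega>. X \<omega> \<bullet> b) \<omega> \<partial>M) = (\<integral>\<omega>. (W \<omega> \<bullet> b) * (X \<omega> \<bullet> b) \<partial>M)"
    if "b \<in> Basis" for b
    using S.real_cond_exp_intg[OF fg[OF that] WbG] by auto
  have eqV: "W \<omega> \<bullet> vcond_exp M (G k) X \<omega> = (\<Sum>b\<in>Basis. (W \<omega> \<bullet> b) * real_cond_exp M (G k) (\<lambda>\<omega>. X \<omega> \<bullet> b) \<omega>)" for \<omega>
    unfolding vcond_exp_def by (simp add: inner_sum_right mult.commute)
  have eqX: "W \<omega> \<bullet> X \<omega> = (\<Sum>b\<in>Basis. (W \<omega> \<bullet> b) * (X \<omega> \<bullet> b))" for \<omega>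
    by (rule euclidean_inner)
  show "integrable M (\<lambda>\<omega>. W \<omega> \<bullet> vcond_exp M (G k) X \<omega>)"
    unfolding eqV using rce(1) by auto
  have "(\<integral>\<omega>. W \<omega> \<bullet> vcond_exp M (G k) X \<omega> \<partial>M) = (\<Sum>b\<in>Basis. \<integral>\<omega>. (W \<omega> \<bullet> b) * real_cond_exp M (G k) (\<lambda>\<omega>. X \<omega> \<bullet> b) \<omega> \<partial>M)"
    unfolding eqV using rce(1) by simp
  also have "\<dots> = (\<Sum>b\<in>Basis. \<integral>\<omega>. (W \<omega> \<bullet> b) * (X \<omega> \<bullet> b) \<partial>M)"
    by (rule sum.cong) (auto simp: rce(2))
  also have "\<dots> = (\<integral>\<omega>. W \<omega> \<bullet> X \<omega> \<partial>M)"
    unfolding eqX using fg by simp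
  finally show "(\<integral>\<omega>. W \<omega> \<bullet> vcond_exp M (G k) X \<omega> \<partial>M) = (\<integral>\<omega>. W \<omega> \<bullet> X \<omega> \<partial>M)" .
qed

lemma vcond_meas[measurable]: "vcond_exp M (G k) X \<in> borel_measurable (G k)"
  unfolding vcond_exp_def by measurable

lemma vproj_sq:
  fixes X Y :: "'w \<Rightarrow> 'a"
  assumes X: "integrable M X" and Y: "Y \<in> borel_measurable (G k)" and A: "A \<in> sets (G k)"
    and bnd: "\<And>\<omega>. \<omega> \<in> A \<Longrightarrow> norm (Y \<omega> - vcond_exp M (G k) X \<omega>) \<le> c"
  shows "(\<integral>\<^sup>+\<omega>. ennreal (indicator A \<omega> * (norm (Y \<omega> - vcond_exp M (G k) X \<omega>))^2) \<partial>M)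
       \<le> (\<integral>\<^sup>+\<omega>. ennreal (indicator A \<omega> * (norm (Y \<omega> - X \<omega>))^2) \<partial>M)"
proof (cases "(\<integral>\<^sup>+\<omega>. ennreal (indicator A \<omega> * (norm (Y \<omega> - X \<omega>))^2) \<partial>M) = \<infinity>")
  case True then show ?thesis by simp
next
  case False
  note [measurable] = Y A
  define V where "V = vcond_exp M (G k) X"
  have AM: "A \<in> sets M" using A G_sub_sets[of k] by auto
  have XM[measurable]: "X \<in> borel_measurable M" using X by auto
  have YM[measurable]: "Y \<in> borel_measurable M" by (rule measurable_from_subalg[OF Gsub Y])
  have VG[measurable]: "V \<in> borel_measurable (G k)" unfolding V_def by measurable
  have VM[measurable]: "V \<in> borel_measurable M" by (rule measurable_from_subalg[OF Gsub VG])
  define u where "u \<omega> = indicator A \<omega> * (norm (Y \<omega> - V \<omega>))^2" for \<omega>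
  define v where "v \<omega> = indicator A \<omega> * (norm (Y \<omega> - X \<omega>))^2" for \<omega>
  define W where "W \<omega> = indicator A \<omega> *\<^sub>R (Y \<omega> - V \<omega>)" for \<omega>
  have WG[measurable]: "W \<in> borel_measurable (G k)" unfolding W_def using A by measurable
  have WM[measurable]: "W \<in> borel_measurable M" by (rule measurable_from_subalg[OF Gsub WG])
  have Wb: "norm (W \<omega>) \<le> \<bar>c\<bar>" for \<omega>
    using bnd[of \<omega>] unfolding W_def V_def by (auto simp: indicator_def intro: order_trans[OF _ abs_ge_self])
  have uM[measurable]: "u \<in> borel_measurable M" unfolding u_def using AM by measurable
  have vM[measurable]: "v \<in> borel_measurable M" unfolding v_def using AM by measurable
  have u_int: "integrable M u"
  proof (rule Mp.integrable_bdd[OF uM])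
    fix \<omega> show "\<bar>u \<omega>\<bar> \<le> c^2"
      using Wb[of \<omega>] unfolding u_def W_def
      by (auto simp: indicator_def abs_le_square_iff[symmetric])
  qed
  have v_int: "integrable M v"
    by (rule integrableI_nonneg) (use False in \<open>auto simp: v_def less_top\<close>)
  have Wsq: "(norm (W \<omega>))^2 = u \<omega>" for \<omega> unfolding W_def u_def by (auto simp: indicator_def)
  have WYX: "W \<omega> \<bullet> (Y \<omega> - X \<omega>) = W \<omega> \<bullet> (indicator A \<omega> *\<^sub>R (Y \<omega> - X \<omega>))" for \<omega>
    unfolding W_def by (auto simp: indicator_def)
  have nIA: "(norm (indicator A \<omega> *\<^sub>R (Y \<omega> - X \<omega>)))^2 = v \<omega>" for \<omega>
    unfolding v_def by (auto simp: indicator_def)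
  have bnd2: "\<bar>W \<omega> \<bullet> (Y \<omega> - X \<omega>)\<bar> \<le> (u \<omega> + v \<omega>) / 2" for \<omega>
    using inner_le_sq[of "W \<omega>" "indicator A \<omega> *\<^sub>R (Y \<omega> - X \<omega>)"] unfolding WYX Wsq nIA .
  have i1: "integrable M (\<lambda>\<omega>. W \<omega> \<bullet> (Y \<omega> - X \<omega>))"
  proof (rule Bochner_Integration.integrable_bound[where f="\<lambda>\<omega>. (u \<omega> + v \<omega>) / 2"])
    show "integrable M (\<lambda>\<omega>. (u \<omega> + v \<omega>) / 2)" using u_int v_int by auto
    show "(\<lambda>\<omega>. W \<omega> \<bullet> (Y \<omega> - X \<omega>)) \<in> borel_measurable M" by measurable
    show "AE \<omega> in M. norm (W \<omega> \<bullet> (Y \<omega> - X \<omega>)) \<le> norm ((u \<omega> + v \<omega>) / 2)"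
      using bnd2 by (intro AE_I2) (auto intro: order_trans[OF _ abs_ge_self])
  qed
  have i2: "integrable M (\<lambda>\<omega>. W \<omega> \<bullet> V \<omega>)" unfolding V_def by (rule vproj(1)[OF X WG Wb])
  have i3: "integrable M (\<lambda>\<omega>. W \<omega> \<bullet> X \<omega>)"
  proof -
    have "integrable M (\<lambda>\<omega>. \<Sum>b\<in>Basis. (W \<omega> \<bullet> b) * (X \<omega> \<bullet> b))"
    proof (rule Bochner_Integration.integrable_sum)
      fix b :: 'a assume b: "b \<in> Basis"
      show "integrable M (\<lambda>\<omega>. (W \<omega> \<bullet> b) * (X \<omega> \<bullet> b))"
      proof (rule Mp.integrable_bdd_mult[where c="\<bar>c\<bar>"])
        show "integrable M (\<lambda>\<omega>. X \<omega> \<bullet> b)" using X by simp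
        show "(\<lambda>\<omega>. W \<omega> \<bullet> b) \<in> borel_measurable M" by measurable
        fix \<omega> show "\<bar>W \<omega> \<bullet> b\<bar> \<le> \<bar>c\<bar>" using Basis_le_norm[OF b, of "W \<omega>"] Wb[of \<omega>] by linarith
      qed
    qed
    moreover have "(\<lambda>\<omega>. W \<omega> \<bullet> X \<omega>) = (\<lambda>\<omega>. \<Sum>b\<in>Basis. (W \<omega> \<bullet> b) * (X \<omega> \<bullet> b))"
      by (rule ext) (rule euclidean_inner)
    ultimately show ?thesis by (simp only:)
  qed
  have pw: "u \<omega> = W \<omega> \<bullet> (Y \<omega> - X \<omega>) + (W \<omega> \<bullet> X \<omega> - W \<omega> \<bullet> V \<omega>)" for \<omega>
  proof -
    have "u \<omega> = W \<omega> \<bullet> (Y \<omega> - V \<omega>)" unfolding u_def W_def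
      by (simp add: power2_norm_eq_inner indicator_def)
    then show ?thesis by (simp add: inner_diff_right)
  qed
  have "integral\<^sup>L M u = (\<integral>\<omega>. W \<omega> \<bullet> (Y \<omega> - X \<omega>) \<partial>M) + ((\<integral>\<omega>. W \<omega> \<bullet> X \<omega> \<partial>M) - (\<integral>\<omega>. W \<omega> \<bullet> V \<omega> \<partial>M))"
    unfolding pw using i1 i2 i3 by simp
  also have "(\<integral>\<omega>. W \<omega> \<bullet> V \<omega> \<partial>M) = (\<integral>\<omega>. W \<omega> \<bullet> X \<omega> \<partial>M)" unfolding V_def by (rule vproj(2)[OF X WG Wb])
  finally have "integral\<^sup>L M u = (\<integral>\<omega>. W \<omega> \<bullet> (Y \<omega> - X \<omega>) \<partial>M)" by simp
  also have "\<dots> \<le> (\<integral>\<omega>. (u \<omega> + v \<omega>) / 2 \<partial>M)"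
  proof (rule integral_mono[OF i1])
    show "integrable M (\<lambda>\<omega>. (u \<omega> + v \<omega>) / 2)" using u_int v_int by simp
    fix \<omega> show "W \<omega> \<bullet> (Y \<omega> - X \<omega>) \<le> (u \<omega> + v \<omega>) / 2"
      using bnd2[of \<omega>] abs_ge_self[of "W \<omega> \<bullet> (Y \<omega> - X \<omega>)"] by linarith
  qed
  also have "\<dots> = integral\<^sup>L M u / 2 + integral\<^sup>L M v / 2" using u_int v_int by simp
  finally have "integral\<^sup>L M u \<le> integral\<^sup>L M v" by simp
  moreover have "(\<integral>\<^sup>+\<omega>. ennreal (u \<omega>) \<partial>M) = ennreal (integral\<^sup>L M u)"
    by (rule nn_integral_eq_integral[OF u_int]) (auto simp: u_def)
  moreover have "(\<integral>\<^sup>+\<omega>. ennreal (v \<omega>) \<partial>M) = ennreal (integral\<^sup>L M v)"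
    by (rule nn_integral_eq_integral[OF v_int]) (auto simp: v_def)
  ultimately have "(\<integral>\<^sup>+\<omega>. ennreal (u \<omega>) \<partial>M) \<le> (\<integral>\<^sup>+\<omega>. ennreal (v \<omega>) \<partial>M)"
    by (simp only:) (rule ennreal_leI)
  then show ?thesis unfolding u_def v_def V_def .
qed

end

lemma ennreal_ind_mult: "ennreal (indicator B \<omega> * r) = indicator B \<omega> * ennreal r"
  by (simp add: indicator_def)

context setting
begin

interpretation Mp: prob_space M by (rule M_prob)
interpretation Pp: prob_space P by (rule P_prob)

lemma F_meas: "F z \<in> borel_measurable P" using F_int[of z] by auto

lemma gFJ[measurable]: "(\<lambda>p. gradF (fst p) (snd p)) \<in> borel_measurable (borel \<Otimes>\<^sub>M P)"
  by (rule grad_joint_meas[OF F_grad F_meas])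

lemma gradF_comp_meas:
  assumes "Y \<in> borel_measurable K" "Xi \<in> measurable K P"
  shows "(\<lambda>\<omega>. gradF (Y \<omega>) (Xi \<omega>)) \<in> borel_measurable K"
proof -
  have "(\<lambda>\<omega>. (Y \<omega>, Xi \<omega>)) \<in> measurable K (borel \<Otimes>\<^sub>M P)" using assms by (rule measurable_Pair)
  from measurable_compose[OF this gFJ] show ?thesis by simp
qed

definition "Zv k i \<omega> = gradF (x k \<omega>) (\<xi> k i \<omega>) - gradf (x k \<omega>)"

lemma Zv_meas[measurable]: "Zv k i \<in> borel_measurable M"
proof -
  have [measurable]: "(\<lambda>\<omega>. gradF (x k \<omega>) (\<xi> k i \<omega>)) \<in> borel_measurable M"
    by (rule gradF_comp_meas[OF xM \<xi>_meas])
  show ?thesis unfolding Zv_def by measurable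
qed

lemma Zsq_nn:
  assumes B: "B \<in> sets (G k)"
  shows "(\<integral>\<^sup>+\<omega>. ennreal (indicator B \<omega> * (norm (Zv k i \<omega>))^2) \<partial>M) \<le> ennreal (\<sigma>^2 * measure M B)"
proof -
  interpret S: sigma_finite_subalgebra M "G k" by (rule sfs)
  have BM: "B \<in> sets M" using B G_sub_sets[of k] by auto
  have ind: "(\<lambda>\<omega>. indicator B \<omega> :: ennreal) \<in> borel_measurable (G k)" using B by measurable
  have zm: "(\<lambda>\<omega>. ennreal ((norm (Zv k i \<omega>))^2)) \<in> borel_measurable M" by measurable
  have eqf: "(\<lambda>\<omega>. ennreal ((norm (Zv k i \<omega>))^2)) = (\<lambda>\<omega>'. ennreal ((norm (gradF (x k \<omega>') (\<xi> k i \<omega>') - gradf (x k \<omega>')))^2))"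
    by (simp add: Zv_def fun_eq_iff)
  have "(\<integral>\<^sup>+\<omega>. ennreal (indicator B \<omega> * (norm (Zv k i \<omega>))^2) \<partial>M)
      = (\<integral>\<^sup>+\<omega>. indicator B \<omega> * ennreal ((norm (Zv k i \<omega>))^2) \<partial>M)"
    by (simp add: ennreal_ind_mult)
  also have "\<dots> = (\<integral>\<^sup>+\<omega>. indicator B \<omega> * nn_cond_exp M (G k) (\<lambda>\<omega>. ennreal ((norm (Zv k i \<omega>))^2)) \<omega> \<partial>M)"
    by (rule S.nn_cond_exp_intg[OF ind zm, symmetric])
  also have "\<dots> \<le> (\<integral>\<^sup>+\<omega>. ennreal (\<sigma>^2) * indicator B \<omega> \<partial>M)"
  proof (rule nn_integral_mono_AE)
    show "AE \<omega> in M. indicator B \<omega> * nn_cond_exp M (G k) (\<lambda>\<omega>. ennreal ((norm (Zv k i \<omega>))^2)) \<omega> \<le> ennreal (\<sigma>^2) * indicator B \<omega>"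
      using assmV[of k i] unfolding eqf[symmetric]
      by eventually_elim (auto simp: indicator_def)
  qed
  also have "\<dots> = ennreal (\<sigma>^2) * emeasure M B" using BM by (rule nn_integral_cmult_indicator)
  also have "\<dots> = ennreal (\<sigma>^2 * measure M B)" by (simp add: Mp.emeasure_eq_measure ennreal_mult)
  finally show ?thesis .
qed

lemma Zsq_int:
  assumes B: "B \<in> sets (G k)"
  shows "integrable M (\<lambda>\<omega>. indicator B \<omega> * (norm (Zv k i \<omega>))^2)"
    "(\<integral>\<omega>. indicator B \<omega> * (norm (Zv k i \<omega>))^2 \<partial>M) \<le> \<sigma>^2 * measure M B"
proof -
  have BM[measurable]: "B \<in> sets M" using B G_sub_sets[of k] by auto
  have fm: "(\<lambda>\<omega>. indicator B \<omega> * (norm (Zv k i \<omega>))^2) \<in> borel_measurable M" by measurable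
  have fin: "(\<integral>\<^sup>+\<omega>. ennreal (indicator B \<omega> * (norm (Zv k i \<omega>))^2) \<partial>M) < \<infinity>"
    using Zsq_nn[OF B, of i] by (simp add: le_less_trans)
  show int: "integrable M (\<lambda>\<omega>. indicator B \<omega> * (norm (Zv k i \<omega>))^2)"
    by (rule integrableI_nonneg[OF fm]) (use fin in auto)
  have "ennreal (\<integral>\<omega>. indicator B \<omega> * (norm (Zv k i \<omega>))^2 \<partial>M) = (\<integral>\<^sup>+\<omega>. ennreal (indicator B \<omega> * (norm (Zv k i \<omega>))^2) \<partial>M)"
    by (rule nn_integral_eq_integral[OF int, symmetric]) auto
  also have "\<dots> \<le> ennreal (\<sigma>^2 * measure M B)" by (rule Zsq_nn[OF B])
  finally show "(\<integral>\<omega>. indicator B \<omega> * (norm (Zv k i \<omega>))^2 \<partial>M) \<le> \<sigma>^2 * measure M B"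
    by (subst (asm) ennreal_le_iff) (auto simp: sigma_nonneg)
qed

lemma cross_int:
  assumes B: "B \<in> sets (G k)"
  shows "integrable M (\<lambda>\<omega>. indicator B \<omega> * (Zv k i \<omega> \<bullet> Zv k j \<omega>))"
proof (rule Bochner_Integration.integrable_bound[where f="\<lambda>\<omega>. (indicator B \<omega> * (norm (Zv k i \<omega>))^2 + indicator B \<omega> * (norm (Zv k j \<omega>))^2) / 2"])
  have BM[measurable]: "B \<in> sets M" using B G_sub_sets[of k] by auto
  show "integrable M (\<lambda>\<omega>. (indicator B \<omega> * (norm (Zv k i \<omega>))^2 + indicator B \<omega> * (norm (Zv k j \<omega>))^2) / 2)"
    using Zsq_int(1)[OF B, of i] Zsq_int(1)[OF B, of j] by auto
  show "(\<lambda>\<omega>. indicator B \<omega> * (Zv k i \<omega> \<bullet> Zv k j \<omega>)) \<in> borel_measurable M" by measurable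
  show "AE \<omega> in M. norm (indicator B \<omega> * (Zv k i \<omega> \<bullet> Zv k j \<omega>)) \<le> norm ((indicator B \<omega> * (norm (Zv k i \<omega>))^2 + indicator B \<omega> * (norm (Zv k j \<omega>))^2) / 2)"
  proof (rule AE_I2)
    fix \<omega>
    have "\<bar>Zv k i \<omega> \<bullet> Zv k j \<omega>\<bar> \<le> ((norm (Zv k i \<omega>))^2 + (norm (Zv k j \<omega>))^2) / 2" by (rule inner_le_sq)
    then show "norm (indicator B \<omega> * (Zv k i \<omega> \<bullet> Zv k j \<omega>)) \<le> norm ((indicator B \<omega> * (norm (Zv k i \<omega>))^2 + indicator B \<omega> * (norm (Zv k j \<omega>))^2) / 2)"
      by (auto simp: indicator_def)
  qed
qed

lemma cross_zero:
  assumes B: "B \<in> sets (G k)" and ij: "i \<noteq> j"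
  shows "(\<integral>\<omega>. indicator B \<omega> * (Zv k i \<omega> \<bullet> Zv k j \<omega>) \<partial>M) = 0"
proof -
  define E where "E = (\<lambda>oi. case oi of None \<Rightarrow> sets (G k) | Some l \<Rightarrow> {\<xi> k l -` A \<inter> space M | A. A \<in> sets P})"
  have ind: "Mp.indep_sets E UNIV" using \<xi>_indep[of k] unfolding E_def .
  define I where "I = (\<lambda>b::bool. if b then {None, Some j} else {Some i})"
  have stab: "Int_stable (E oi)" for oi
  proof (cases oi)
    case None
    then show ?thesis unfolding E_def Int_stable_def by auto
  next
    case (Some l)
    show ?thesis unfolding E_def Some Int_stable_def
    proof (clarsimp)
      fix A B assume "A \<in> sets P" "B \<in> sets P"
      then show "\<exists>C. \<xi> k l -` A \<inter> space M \<inter> (\<xi> k l -` B \<inter> space M) = \<xi> k l -` C \<inter> space M \<and> C \<in> sets P"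
        by (intro exI[of _ "A \<inter> B"]) auto
    qed
  qed
  have ind2: "Mp.indep_sets (\<lambda>b. sigma_sets (space M) (\<Union>oi\<in>I b. E oi)) UNIV"
  proof (rule Mp.indep_sets_collect_sigma)
    show "Mp.indep_sets E (\<Union>b\<in>UNIV. I b)" by (rule Mp.indep_sets_mono_index[OF _ ind]) simp
    show "disjoint_family_on I UNIV" unfolding disjoint_family_on_def I_def using ij by auto
  qed (rule stab)
  define Gen where "Gen = sets (G k) \<union> {\<xi> k j -` A \<inter> space M | A. A \<in> sets P}"
  define H1 where "H1 = sigma (space M) Gen"
  have genPow: "Gen \<subseteq> Pow (space M)"
    unfolding Gen_def using sets.sets_into_space[of _ "G k"] by auto
  have sH1: "sets H1 = sigma_sets (space M) Gen" unfolding H1_def by (rule sets_measure_of[OF genPow])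
  have spH1: "space H1 = space M" unfolding H1_def by (simp add: space_measure_of_conv)
  have unionT: "(\<Union>oi\<in>I True. E oi) = Gen" unfolding I_def E_def Gen_def by auto
  have genM: "Gen \<subseteq> sets M"
    unfolding Gen_def using G_sub_sets[of k] \<xi>_meas[of k j] by (auto simp: measurable_def)
  have sub: "subalgebra M H1"
    unfolding subalgebra_def spH1 sH1 using sets.sigma_sets_subset[OF genM] by simp
  have indep: "measure M (A \<inter> (\<xi> k i -` Bs \<inter> space M)) = measure M A * measure M (\<xi> k i -` Bs \<inter> space M)"
    if A: "A \<in> sets H1" and Bs: "Bs \<in> sets P" for A Bs
  proof -
    define AA where "AA = (\<lambda>b::bool. if b then A else \<xi> k i -` Bs \<inter> space M)"
    have mem: "\<forall>b\<in>UNIV. AA b \<in> sigma_sets (space M) (\<Union>oi\<in>I b. E oi)"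
    proof
      fix b :: bool
      show "AA b \<in> sigma_sets (space M) (\<Union>oi\<in>I b. E oi)"
      proof (cases b)
        case True
        then have e1: "AA b = A" unfolding AA_def by simp
        have e2: "(\<Union>oi\<in>I b. E oi) = Gen" using True unionT by simp
        show ?thesis unfolding e1 e2 using A sH1 by simp
      next
        case False
        have "\<xi> k i -` Bs \<inter> space M \<in> (\<Union>oi\<in>I False. E oi)" using Bs unfolding I_def E_def by auto
        then show ?thesis using False unfolding AA_def by (auto intro: sigma_sets.Basic)
      qed
    qed
    from Mp.indep_setsD[OF ind2 subset_UNIV _ _ mem]
    have "measure M (\<Inter>b\<in>UNIV. AA b) = (\<Prod>b\<in>UNIV. measure M (AA b))" by simp
    then show ?thesis unfolding AA_def UNIV_bool by (simp add: Int_commute mult.commute)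
  qed
  have subG: "subalgebra H1 (G k)"
    unfolding subalgebra_def spH1 sH1 unfolding Gen_def by (auto intro: sigma_sets.Basic)
  have xH1[measurable]: "x k \<in> borel_measurable H1" by (rule measurable_from_subalg[OF subG xG])
  have \<xi>H1[measurable]: "\<xi> k j \<in> measurable H1 P"
  proof (rule measurableI)
    fix \<omega> assume "\<omega> \<in> space H1" then show "\<xi> k j \<omega> \<in> space P"
      using \<xi>_meas[of k j] spH1 by (auto simp: measurable_def)
  next
    fix A assume "A \<in> sets P"
    then have "\<xi> k j -` A \<inter> space M \<in> Gen" unfolding Gen_def by auto
    then show "\<xi> k j -` A \<inter> space H1 \<in> sets H1" unfolding spH1 sH1 by (auto intro: sigma_sets.Basic)
  qed
  have BH1[measurable]: "B \<in> sets H1" using B unfolding sH1 Gen_def by (auto intro: sigma_sets.Basic)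
  have ZjH1[measurable]: "Zv k j \<in> borel_measurable H1"
  proof -
    have [measurable]: "(\<lambda>\<omega>. gradF (x k \<omega>) (\<xi> k j \<omega>)) \<in> borel_measurable H1"
      by (rule gradF_comp_meas[OF xH1 \<xi>H1])
    show ?thesis unfolding Zv_def by measurable
  qed
  define \<Phi> where "\<Phi> p = indicator B (fst p) * ((gradF (x k (fst p)) (snd p) - gradf (x k (fst p))) \<bullet> Zv k j (fst p))" for p
  have \<Phi>m: "\<Phi> \<in> borel_measurable (H1 \<Otimes>\<^sub>M P)"
  proof -
    have [measurable]: "(\<lambda>p. gradF (x k (fst p)) (snd p)) \<in> borel_measurable (H1 \<Otimes>\<^sub>M P)"
      by (rule gradF_comp_meas) measurable
    show ?thesis unfolding \<Phi>_def by measurable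
  qed
  have intg: "integrable M (\<lambda>\<omega>. \<Phi> (\<omega>, \<xi> k i \<omega>))"
    using cross_int[OF B, of i j] unfolding \<Phi>_def Zv_def by simp
  have inner0: "(\<integral>s. \<Phi> (\<omega>, s) \<partial>P) = 0" for \<omega>
  proof -
    define y where "y = x k \<omega>"
    have gi: "integrable P (\<lambda>s. gradF y s - gradf y)" using gradF_int[of y] by auto
    have "(\<integral>s. gradF y s - gradf y \<partial>P) = 0"
      using gradF_int[of y] by (simp add: gradf_exp[of y] Pp.prob_space)
    then have "(\<integral>s. (gradF y s - gradf y) \<bullet> Zv k j \<omega> \<partial>P) = 0"
      using integral_inner_left[of "Zv k j \<omega>" P "\<lambda>s. gradF y s - gradf y"] gi by simp
    then show ?thesis unfolding \<Phi>_def y_def by simp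
  qed
  have "(\<integral>\<omega>. \<Phi> (\<omega>, \<xi> k i \<omega>) \<partial>M) = 0"
    by (rule freeze_zero[OF M_prob sub \<xi>_meas \<xi>_distr indep \<Phi>m intg inner0])
  then show ?thesis unfolding \<Phi>_def Zv_def by simp
qed

end

context setting
begin

interpretation Mp: prob_space M by (rule M_prob)

lemma sumZ:
  assumes B: "B \<in> sets (G k)" and m: "m \<ge> 1"
  shows "(\<integral>\<^sup>+\<omega>. ennreal (indicator B \<omega> * (norm (\<Sum>i<m. Zv k i \<omega>))^2 / (real m)^2) \<partial>M)
      \<le> ennreal (\<sigma>^2 / real m * measure M B)"
proof -
  have BM[measurable]: "B \<in> sets M" using B G_sub_sets[of k] by auto
  define f where "f i j \<omega> = indicator B \<omega> * (Zv k i \<omega> \<bullet> Zv k j \<omega>)" for i j \<omega>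
  have fi: "integrable M (f i j)" for i j unfolding f_def by (rule cross_int[OF B])
  have eq: "indicator B \<omega> * (norm (\<Sum>i<m. Zv k i \<omega>))^2 = (\<Sum>i<m. \<Sum>j<m. f i j \<omega>)" for \<omega>
    unfolding f_def power2_norm_eq_inner inner_sum_left inner_sum_right sum_distrib_left by (rule sum.swap)
  have int: "integrable M (\<lambda>\<omega>. indicator B \<omega> * (norm (\<Sum>i<m. Zv k i \<omega>))^2)"
    unfolding eq using fi by auto
  have diag: "(\<Sum>j<m. integral\<^sup>L M (f i j)) = integral\<^sup>L M (f i i)" if "i < m" for i
  proof -
    have "(\<Sum>j<m. integral\<^sup>L M (f i j)) = (\<Sum>j<m. if j = i then integral\<^sup>L M (f i i) else 0)"
    proof (rule sum.cong)
      fix j assume "j \<in> {..<m}"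
      show "integral\<^sup>L M (f i j) = (if j = i then integral\<^sup>L M (f i i) else 0)"
      proof (cases "j = i")
        case False
        then have "i \<noteq> j" by simp
        from cross_zero[OF B this] show ?thesis using False unfolding f_def by simp
      qed simp
    qed simp
    also have "\<dots> = integral\<^sup>L M (f i i)" using that by (simp add: sum.delta')
    finally show ?thesis .
  qed
  have fii: "integral\<^sup>L M (f i i) \<le> \<sigma>^2 * measure M B" for i
    unfolding f_def using Zsq_int(2)[OF B, of i] by (simp add: power2_norm_eq_inner)
  have "(\<integral>\<omega>. indicator B \<omega> * (norm (\<Sum>i<m. Zv k i \<omega>))^2 \<partial>M) = (\<Sum>i<m. \<Sum>j<m. integral\<^sup>L M (f i j))"
    unfolding eq using fi by simp
  also have "\<dots> = (\<Sum>i<m. integral\<^sup>L M (f i i))" by (rule sum.cong) (auto simp: diag)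
  also have "\<dots> \<le> (\<Sum>i<m. \<sigma>^2 * measure M B)" by (rule sum_mono) (rule fii)
  also have "\<dots> = real m * (\<sigma>^2 * measure M B)" by simp
  finally have I: "(\<integral>\<omega>. indicator B \<omega> * (norm (\<Sum>i<m. Zv k i \<omega>))^2 \<partial>M) \<le> real m * (\<sigma>^2 * measure M B)" .
  have int2: "integrable M (\<lambda>\<omega>. indicator B \<omega> * (norm (\<Sum>i<m. Zv k i \<omega>))^2 / (real m)^2)"
    using int by simp
  have "(\<integral>\<^sup>+\<omega>. ennreal (indicator B \<omega> * (norm (\<Sum>i<m. Zv k i \<omega>))^2 / (real m)^2) \<partial>M)
      = ennreal (\<integral>\<omega>. indicator B \<omega> * (norm (\<Sum>i<m. Zv k i \<omega>))^2 / (real m)^2 \<partial>M)"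
    by (rule nn_integral_eq_integral[OF int2]) auto
  also have "(\<integral>\<omega>. indicator B \<omega> * (norm (\<Sum>i<m. Zv k i \<omega>))^2 / (real m)^2 \<partial>M)
      = (\<integral>\<omega>. indicator B \<omega> * (norm (\<Sum>i<m. Zv k i \<omega>))^2 \<partial>M) / (real m)^2" by simp
  also have "\<dots> \<le> real m * (\<sigma>^2 * measure M B) / (real m)^2"
    by (rule divide_right_mono[OF I]) simp
  also have "\<dots> = \<sigma>^2 / real m * measure M B" using m by (simp add: power2_eq_square field_simps)
  finally show ?thesis by (simp add: ennreal_leI)
qed

lemma Rv_fun: "Rv k = (\<lambda>\<omega>'. (1 / \<alpha>) *\<^sub>R (x k \<omega>' - x (Suc k) \<omega>'))"
  by (rule ext) (simp add: Rv_def)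

lemma Dv_eq: "Dv k \<omega> = \<eta>^2 / 4 * (norm (vcond_exp M (G k) (\<lambda>\<omega>'. (1 / \<alpha>) *\<^sub>R (x k \<omega>' - x (Suc k) \<omega>')) \<omega>))^2 + \<iota>0^2 * (\<delta> k)^2"
  by (simp add: Dv_def Vv_def Rv_fun)

lemma e_AE: "AE \<omega> in M. (Dv k \<omega> > 0 \<longrightarrow> erv k \<omega> = - ((1 / real (Nm k \<omega>)) *\<^sub>R (\<Sum>i<Nm k \<omega>. Zv k i \<omega>)))
                     \<and> (Dv k \<omega> = 0 \<longrightarrow> erv k \<omega> = 0)"
  using sample_rule[of k]
proof eventually_elim
  case (elim \<omega>)
  note el = elim[unfolded Let_def Dv_eq[symmetric]]
  show ?case
  proof (intro conjI impI)
    assume D: "Dv k \<omega> > 0"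
    then have NN: "N k \<omega> = Nm k \<omega>" and gg: "g k \<omega> = (1 / real (N k \<omega>)) *\<^sub>R (\<Sum>i<N k \<omega>. gradF (x k \<omega>) (\<xi> k i \<omega>))"
      using el unfolding Nm_def by auto
    define n where "n = Nm k \<omega>"
    have n0: "real n \<noteq> 0" using Nm_ge1[of k \<omega>] unfolding n_def by simp
    have "(1 / real n) *\<^sub>R (\<Sum>i<n. Zv k i \<omega>) = (1 / real n) *\<^sub>R (\<Sum>i<n. gradF (x k \<omega>) (\<xi> k i \<omega>)) - (1 / real n) *\<^sub>R (real n *\<^sub>R gradf (x k \<omega>))"
      unfolding Zv_def by (simp add: sum_subtractf scaleR_right_diff_distrib sum_constant_scaleR)
    also have "(1 / real n) *\<^sub>R (real n *\<^sub>R gradf (x k \<omega>)) = gradf (x k \<omega>)" using n0 by simp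
    finally show "erv k \<omega> = - ((1 / real (Nm k \<omega>)) *\<^sub>R (\<Sum>i<Nm k \<omega>. Zv k i \<omega>))"
      unfolding erv_def gg NN n_def[symmetric] by simp
  next
    assume "Dv k \<omega> = 0"
    then show "erv k \<omega> = 0" using el unfolding erv_def by simp
  qed
qed

lemma sample_bound:
  assumes A: "A \<in> sets (G k)"
  shows "(\<integral>\<^sup>+\<omega>. ennreal (indicator A \<omega> * (norm (erv k \<omega>))^2) \<partial>M) \<le> (\<integral>\<^sup>+\<omega>. ennreal (indicator A \<omega> * wv k \<omega>) \<partial>M)"
proof -
  have AM[measurable]: "A \<in> sets M" using A G_sub_sets[of k] by auto
  note A[measurable]
  define C where "C n = A \<inter> {\<omega> \<in> space M. Dv k \<omega> > 0 \<and> Nm k \<omega> = Suc n}" for n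
  have CG: "C n \<in> sets (G k)" for n
  proof -
    have "{\<omega> \<in> space (G k). 0 < Dv k \<omega> \<and> Nm k \<omega> = Suc n} \<in> sets (G k)" by measurable
    then have "A \<inter> {\<omega> \<in> space (G k). 0 < Dv k \<omega> \<and> Nm k \<omega> = Suc n} \<in> sets (G k)" using A by blast
    then show ?thesis unfolding C_def by simp
  qed
  have CM[measurable]: "C n \<in> sets M" for n using CG[of n] G_sub_sets[of k] by auto
  define t where "t n \<omega> = ennreal (indicator (C n) \<omega> * (norm (\<Sum>i<Suc n. Zv k i \<omega>))^2 / (real (Suc n))^2)" for n \<omega>
  define s where "s n \<omega> = ennreal (indicator (C n) \<omega> * (\<sigma>^2 / real (Suc n)))" for n \<omega>
  have tm[measurable]: "t n \<in> borel_measurable M" for n unfolding t_def by measurable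
  have sm[measurable]: "s n \<in> borel_measurable M" for n unfolding s_def by measurable
  have single: "suminf u = u n0" if "\<And>n. n \<noteq> n0 \<Longrightarrow> u n = 0" for u :: "nat \<Rightarrow> ennreal" and n0
    using suminf_finite[of "{n0}" u] that by auto
  have L: "AE \<omega> in M. ennreal (indicator A \<omega> * (norm (erv k \<omega>))^2) = (\<Sum>n. t n \<omega>)"
    using e_AE[of k]
  proof eventually_elim
    case (elim \<omega>)
    show ?case
    proof (cases "\<omega> \<in> A \<and> Dv k \<omega> > 0")
      case True
      define n0 where "n0 = Nm k \<omega> - 1"
      have Sn0: "Suc n0 = Nm k \<omega>" using Nm_ge1[of k \<omega>] unfolding n0_def by simp
      have \<omega>M: "\<omega> \<in> space M" using True AM sets.sets_into_space by blast
      have Cn: "\<omega> \<in> C n \<longleftrightarrow> n = n0" for n using True \<omega>M Sn0 unfolding C_def by auto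
      have "(\<Sum>n. t n \<omega>) = t n0 \<omega>" by (rule single) (auto simp: t_def Cn)
      also have "\<dots> = ennreal ((norm (\<Sum>i<Nm k \<omega>. Zv k i \<omega>))^2 / (real (Nm k \<omega>))^2)"
        unfolding t_def using Cn[of n0] Sn0 by simp
      also have "(norm (\<Sum>i<Nm k \<omega>. Zv k i \<omega>))^2 / (real (Nm k \<omega>))^2 = (norm (erv k \<omega>))^2"
        using elim True by (simp add: power_divide)
      finally show ?thesis using True by simp
    next
      case False
      have Cn: "\<omega> \<notin> C n" for n using False unfolding C_def by auto
      have "(\<Sum>n. t n \<omega>) = 0" by (simp add: t_def Cn)
      moreover have "indicator A \<omega> * (norm (erv k \<omega>))^2 = 0"
        using False elim Dv_nonneg[of k \<omega>] by (auto simp: indicator_def)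
      ultimately show ?thesis by simp
    qed
  qed
  have R: "(\<Sum>n. s n \<omega>) \<le> ennreal (indicator A \<omega> * wv k \<omega>)" for \<omega>
  proof (cases "\<omega> \<in> A \<and> Dv k \<omega> > 0 \<and> \<omega> \<in> space M")
    case True
    define n0 where "n0 = Nm k \<omega> - 1"
    have Sn0: "Suc n0 = Nm k \<omega>" using Nm_ge1[of k \<omega>] unfolding n0_def by simp
    have Cn: "\<omega> \<in> C n \<longleftrightarrow> n = n0" for n using True Sn0 unfolding C_def by auto
    have "(\<Sum>n. s n \<omega>) = s n0 \<omega>" by (rule single) (auto simp: s_def Cn)
    also have "\<dots> = ennreal (indicator A \<omega> * wv k \<omega>)"
      unfolding s_def wv_def using Cn[of n0] Sn0 True by simp
    finally show ?thesis by simp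
  next
    case False
    have Cn: "\<omega> \<notin> C n" for n using False unfolding C_def by auto
    have "(\<Sum>n. s n \<omega>) = 0" by (simp add: s_def Cn)
    then show ?thesis by simp
  qed
  have each: "integral\<^sup>N M (t n) \<le> integral\<^sup>N M (s n)" for n
  proof -
    have "integral\<^sup>N M (t n) \<le> ennreal (\<sigma>^2 / real (Suc n) * measure M (C n))"
      unfolding t_def by (rule sumZ[OF CG]) simp
    also have "\<dots> = integral\<^sup>N M (s n)"
    proof -
      have "integral\<^sup>N M (s n) = (\<integral>\<^sup>+\<omega>. ennreal (\<sigma>^2 / real (Suc n)) * indicator (C n) \<omega> \<partial>M)"
        unfolding s_def by (rule nn_integral_cong) (simp add: indicator_def)
      also have "\<dots> = ennreal (\<sigma>^2 / real (Suc n)) * emeasure M (C n)"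
        by (rule nn_integral_cmult_indicator) simp
      also have "\<dots> = ennreal (\<sigma>^2 / real (Suc n)) * ennreal (measure M (C n))"
        by (simp add: Mp.emeasure_eq_measure)
      also have "\<dots> = ennreal (\<sigma>^2 / real (Suc n) * measure M (C n))"
        by (rule ennreal_mult'[symmetric]) simp
      finally show ?thesis by simp
    qed
    finally show ?thesis .
  qed
  have "(\<integral>\<^sup>+\<omega>. ennreal (indicator A \<omega> * (norm (erv k \<omega>))^2) \<partial>M) = (\<integral>\<^sup>+\<omega>. (\<Sum>n. t n \<omega>) \<partial>M)"
    by (rule nn_integral_cong_AE[OF L])
  also have "\<dots> = (\<Sum>n. integral\<^sup>N M (t n))" by (rule nn_integral_suminf) simp
  also have "\<dots> \<le> (\<Sum>n. integral\<^sup>N M (s n))" by (intro suminf_le each summableI)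
  also have "\<dots> = (\<integral>\<^sup>+\<omega>. (\<Sum>n. s n \<omega>) \<partial>M)" by (rule nn_integral_suminf[symmetric]) simp
  also have "\<dots> \<le> (\<integral>\<^sup>+\<omega>. ennreal (indicator A \<omega> * wv k \<omega>) \<partial>M)" by (rule nn_integral_mono) (rule R)
  finally show ?thesis .
qed

end

context setting
begin

interpretation Mp: prob_space M by (rule M_prob)

lemma wv_meas[measurable]: "wv k \<in> borel_measurable M"
  by (rule measurable_from_subalg[OF Gsub wv_G])

lemma Dv_meas[measurable]: "Dv k \<in> borel_measurable M"
  by (rule measurable_from_subalg[OF Gsub Dv_G])

lemma Rv_int: "integrable M (Rv k)" using R_int[of k] by (simp add: Rv_fun)

lemma wv_int_le: "(\<integral>\<^sup>+\<omega>. ennreal (indicator A \<omega> * wv k \<omega>) \<partial>M) \<le> ennreal (\<sigma>^2)"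
proof -
  have "(\<integral>\<^sup>+\<omega>. ennreal (indicator A \<omega> * wv k \<omega>) \<partial>M) \<le> (\<integral>\<^sup>+\<omega>. ennreal (\<sigma>^2) \<partial>M)"
    using wv_le_sigma[of k] wv_nonneg[of k] by (intro nn_integral_mono) (auto simp: indicator_def ennreal_leI)
  also have "\<dots> = ennreal (\<sigma>^2)" by (simp add: Mp.emeasure_space_1)
  finally show ?thesis .
qed

lemma TV_AE: "AE \<omega> in M. (norm (Tv k \<omega> - Vv k \<omega>))^2 \<le> wv k \<omega>"
proof -
  define Am where "Am m = {\<omega> \<in> space (G k). wv k \<omega> + 1 / real (Suc m) < (norm (Tv k \<omega> - Vv k \<omega>))^2 \<and> norm (Tv k \<omega> - Vv k \<omega>) \<le> real m}" for m
  have AmG: "Am m \<in> sets (G k)" for m unfolding Am_def by measurable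
  have AmM[measurable]: "Am m \<in> sets M" for m using AmG[of m] G_sub_sets[of k] by auto
  have null: "Am m \<in> null_sets M" for m
  proof -
    let ?I = "(\<integral>\<^sup>+\<omega>. ennreal (indicator (Am m) \<omega> * wv k \<omega>) \<partial>M)"
    have up: "(\<integral>\<^sup>+\<omega>. ennreal (indicator (Am m) \<omega> * (norm (Tv k \<omega> - Vv k \<omega>))^2) \<partial>M) \<le> ?I"
    proof -
      have "(\<integral>\<^sup>+\<omega>. ennreal (indicator (Am m) \<omega> * (norm (Tv k \<omega> - Vv k \<omega>))^2) \<partial>M)
          \<le> (\<integral>\<^sup>+\<omega>. ennreal (indicator (Am m) \<omega> * (norm (Tv k \<omega> - Rv k \<omega>))^2) \<partial>M)"
        unfolding Vv_def by (rule vproj_sq[OF Rv_int Tv_G AmG, where c="real m"]) (auto simp: Am_def Vv_def)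
      also have "\<dots> \<le> (\<integral>\<^sup>+\<omega>. ennreal (indicator (Am m) \<omega> * (norm (erv k \<omega>))^2) \<partial>M)"
      proof (rule nn_integral_mono)
        fix \<omega> assume "\<omega> \<in> space M"
        from TR_le_e[OF this, of k] have "(norm (Tv k \<omega> - Rv k \<omega>))^2 \<le> (norm (erv k \<omega>))^2"
          by (simp add: power_mono)
        then show "ennreal (indicator (Am m) \<omega> * (norm (Tv k \<omega> - Rv k \<omega>))^2) \<le> ennreal (indicator (Am m) \<omega> * (norm (erv k \<omega>))^2)"
          by (auto simp: indicator_def intro: ennreal_leI)
      qed
      also have "\<dots> \<le> ?I" by (rule sample_bound[OF AmG])
      finally show ?thesis .
    qed
    have low: "?I + emeasure M (Am m) * ennreal (1 / real (Suc m))
        \<le> (\<integral>\<^sup>+\<omega>. ennreal (indicator (Am m) \<omega> * (norm (Tv k \<omega> - Vv k \<omega>))^2) \<partial>M)"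
    proof -
      have "?I + emeasure M (Am m) * ennreal (1 / real (Suc m))
          = ?I + (\<integral>\<^sup>+\<omega>. ennreal (1 / real (Suc m)) * indicator (Am m) \<omega> \<partial>M)"
      proof -
        have "emeasure M (Am m) * ennreal (1 / real (Suc m)) = (\<integral>\<^sup>+\<omega>. ennreal (1 / real (Suc m)) * indicator (Am m) \<omega> \<partial>M)"
          by (subst nn_integral_cmult_indicator[OF AmM]) (rule mult.commute)
        then show ?thesis by (simp only:)
      qed
      also have "\<dots> = (\<integral>\<^sup>+\<omega>. ennreal (indicator (Am m) \<omega> * wv k \<omega>) + ennreal (1 / real (Suc m)) * indicator (Am m) \<omega> \<partial>M)"
        by (rule nn_integral_add[symmetric]) auto
      also have "\<dots> \<le> (\<integral>\<^sup>+\<omega>. ennreal (indicator (Am m) \<omega> * (norm (Tv k \<omega> - Vv k \<omega>))^2) \<partial>M)"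
      proof (rule nn_integral_mono)
        fix \<omega> assume "\<omega> \<in> space M"
        show "ennreal (indicator (Am m) \<omega> * wv k \<omega>) + ennreal (1 / real (Suc m)) * indicator (Am m) \<omega>
            \<le> ennreal (indicator (Am m) \<omega> * (norm (Tv k \<omega> - Vv k \<omega>))^2)"
        proof (cases "\<omega> \<in> Am m")
          case True
          then have "wv k \<omega> + 1 / real (Suc m) < (norm (Tv k \<omega> - Vv k \<omega>))^2" unfolding Am_def by simp
          then show ?thesis using True wv_nonneg[of k \<omega>]
            by (simp add: ennreal_plus[symmetric] del: ennreal_plus)
        qed simp
      qed
      finally show ?thesis .
    qed
    have fin: "?I \<noteq> \<infinity>" using wv_int_le[of "Am m" k] by (auto simp: top_unique)
    from order_trans[OF low up] have "?I + emeasure M (Am m) * ennreal (1 / real (Suc m)) \<le> ?I + 0" by simp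
    then have "emeasure M (Am m) * ennreal (1 / real (Suc m)) \<le> 0"
      using fin by (simp add: ennreal_add_left_cancel_le)
    then have "emeasure M (Am m) = 0" by (simp add: le_zero_eq mult_eq_0_iff)
    then show ?thesis by auto
  qed
  have N: "(\<Union>m. Am m) \<in> null_sets M" using null by (rule null_sets_UN)
  show ?thesis
  proof (rule AE_I'[OF N])
    show "{\<omega> \<in> space M. \<not> (norm (Tv k \<omega> - Vv k \<omega>))^2 \<le> wv k \<omega>} \<subseteq> (\<Union>m. Am m)"
    proof
      fix \<omega> assume "\<omega> \<in> {\<omega> \<in> space M. \<not> (norm (Tv k \<omega> - Vv k \<omega>))^2 \<le> wv k \<omega>}"
      then have \<omega>: "\<omega> \<in> space M" and lt: "wv k \<omega> < (norm (Tv k \<omega> - Vv k \<omega>))^2" by auto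
      define d where "d = (norm (Tv k \<omega> - Vv k \<omega>))^2 - wv k \<omega>"
      have d0: "d > 0" using lt unfolding d_def by simp
      obtain m1 :: nat where m1: "1 / real (Suc m1) < d" using reals_Archimedean[OF d0] by (auto simp: inverse_eq_divide)
      obtain m2 :: nat where m2: "norm (Tv k \<omega> - Vv k \<omega>) \<le> real m2" using real_arch_simple by blast
      define m where "m = max m1 m2"
      have "1 / real (Suc m) \<le> 1 / real (Suc m1)" unfolding m_def by (simp add: frac_le)
      then have "wv k \<omega> + 1 / real (Suc m) < (norm (Tv k \<omega> - Vv k \<omega>))^2" using m1 unfolding d_def by linarith
      moreover have "norm (Tv k \<omega> - Vv k \<omega>) \<le> real m" using m2 unfolding m_def by (simp add: le_max_iff_disj)
      ultimately have "\<omega> \<in> Am m" unfolding Am_def using \<omega> by simp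
      then show "\<omega> \<in> (\<Union>m. Am m)" by blast
    qed
  qed
qed

lemma V_le_R: "(\<integral>\<^sup>+\<omega>. ennreal ((norm (Vv k \<omega>))^2) \<partial>M) \<le> (\<integral>\<^sup>+\<omega>. ennreal ((norm (Rv k \<omega>))^2) \<partial>M)"
proof -
  define Bm where "Bm m = {\<omega> \<in> space (G k). norm (Vv k \<omega>) \<le> real m}" for m
  have BmG: "Bm m \<in> sets (G k)" for m unfolding Bm_def by measurable
  have BmM[measurable]: "Bm m \<in> sets M" for m using BmG[of m] G_sub_sets[of k] by auto
  define fm where "fm m \<omega> = ennreal (indicator (Bm m) \<omega> * (norm (Vv k \<omega>))^2)" for m \<omega>
  have fmm[measurable]: "fm m \<in> borel_measurable M" for m unfolding fm_def by measurable
  have inc: "incseq fm"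
  proof (rule incseq_SucI, rule le_funI)
    fix m \<omega>
    have "Bm m \<subseteq> Bm (Suc m)" unfolding Bm_def by auto
    then show "fm m \<omega> \<le> fm (Suc m) \<omega>" unfolding fm_def by (auto simp: indicator_def intro: ennreal_leI)
  qed
  have each: "integral\<^sup>N M (fm m) \<le> (\<integral>\<^sup>+\<omega>. ennreal ((norm (Rv k \<omega>))^2) \<partial>M)" for m
  proof -
    have "integral\<^sup>N M (fm m) \<le> (\<integral>\<^sup>+\<omega>. ennreal (indicator (Bm m) \<omega> * (norm (0 - Rv k \<omega>))^2) \<partial>M)"
      using vproj_sq[OF Rv_int borel_measurable_const[of "0::'a"] BmG, where c="real m"] unfolding fm_def Vv_def
      by (auto simp: Bm_def Vv_def)
    also have "\<dots> \<le> (\<integral>\<^sup>+\<omega>. ennreal ((norm (Rv k \<omega>))^2) \<partial>M)"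
      by (rule nn_integral_mono) (auto simp: indicator_def intro: ennreal_leI)
    finally show ?thesis .
  qed
  have "(\<integral>\<^sup>+\<omega>. ennreal ((norm (Vv k \<omega>))^2) \<partial>M) \<le> (\<integral>\<^sup>+\<omega>. (SUP m. fm m \<omega>) \<partial>M)"
  proof (rule nn_integral_mono)
    fix \<omega> assume \<omega>: "\<omega> \<in> space M"
    obtain m :: nat where m: "norm (Vv k \<omega>) \<le> real m" using real_arch_simple by blast
    then have "fm m \<omega> = ennreal ((norm (Vv k \<omega>))^2)" unfolding fm_def Bm_def using \<omega> by simp
    then show "ennreal ((norm (Vv k \<omega>))^2) \<le> (SUP m. fm m \<omega>)" by (metis SUP_upper UNIV_I)
  qed
  also have "\<dots> = (SUP m. integral\<^sup>N M (fm m))" by (rule nn_integral_monotone_convergence_SUP[OF inc fmm])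
  also have "\<dots> \<le> (\<integral>\<^sup>+\<omega>. ennreal ((norm (Rv k \<omega>))^2) \<partial>M)" by (rule SUP_least) (rule each)
  finally show ?thesis .
qed

lemma e_int_sigma: "(\<integral>\<^sup>+\<omega>. ennreal ((norm (erv k \<omega>))^2) \<partial>M) \<le> ennreal (\<sigma>^2)"
proof -
  have "(\<integral>\<^sup>+\<omega>. ennreal ((norm (erv k \<omega>))^2) \<partial>M) = (\<integral>\<^sup>+\<omega>. ennreal (indicator (space M) \<omega> * (norm (erv k \<omega>))^2) \<partial>M)"
    by (rule nn_integral_cong) simp
  also have "\<dots> \<le> (\<integral>\<^sup>+\<omega>. ennreal (indicator (space M) \<omega> * wv k \<omega>) \<partial>M)"
    by (rule sample_bound) (metis sets.top space_G)
  also have "\<dots> \<le> ennreal (\<sigma>^2)" by (rule wv_int_le)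
  finally show ?thesis .
qed

lemma e_int_D: "(\<integral>\<^sup>+\<omega>. ennreal ((norm (erv k \<omega>))^2) \<partial>M)
    \<le> ennreal (\<eta>^2 / 4) * (\<integral>\<^sup>+\<omega>. ennreal ((norm (Rv k \<omega>))^2) \<partial>M) + ennreal (\<iota>0^2 * (\<delta> k)^2)"
proof -
  have "(\<integral>\<^sup>+\<omega>. ennreal ((norm (erv k \<omega>))^2) \<partial>M) = (\<integral>\<^sup>+\<omega>. ennreal (indicator (space M) \<omega> * (norm (erv k \<omega>))^2) \<partial>M)"
    by (rule nn_integral_cong) simp
  also have "\<dots> \<le> (\<integral>\<^sup>+\<omega>. ennreal (indicator (space M) \<omega> * wv k \<omega>) \<partial>M)"
    by (rule sample_bound) (metis sets.top space_G)
  also have "\<dots> \<le> (\<integral>\<^sup>+\<omega>. ennreal (\<eta>^2 / 4) * ennreal ((norm (Vv k \<omega>))^2) + ennreal (\<iota>0^2 * (\<delta> k)^2) \<partial>M)"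
  proof (rule nn_integral_mono)
    fix \<omega> assume "\<omega> \<in> space M"
    then have "indicator (space M) \<omega> * wv k \<omega> \<le> Dv k \<omega>" using wv_le_D[of k \<omega>] by simp
    then have "ennreal (indicator (space M) \<omega> * wv k \<omega>) \<le> ennreal (Dv k \<omega>)" by (rule ennreal_leI)
    also have "ennreal (Dv k \<omega>) = ennreal (\<eta>^2 / 4) * ennreal ((norm (Vv k \<omega>))^2) + ennreal (\<iota>0^2 * (\<delta> k)^2)"
      unfolding Dv_def by (simp add: ennreal_plus[symmetric] ennreal_mult[symmetric] del: ennreal_plus)
    finally show "ennreal (indicator (space M) \<omega> * wv k \<omega>) \<le> ennreal (\<eta>^2 / 4) * ennreal ((norm (Vv k \<omega>))^2) + ennreal (\<iota>0^2 * (\<delta> k)^2)" .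
  qed
  also have "\<dots> = ennreal (\<eta>^2 / 4) * (\<integral>\<^sup>+\<omega>. ennreal ((norm (Vv k \<omega>))^2) \<partial>M) + ennreal (\<iota>0^2 * (\<delta> k)^2)"
    by (simp add: nn_integral_add nn_integral_cmult Mp.emeasure_space_1)
  also have "\<dots> \<le> ennreal (\<eta>^2 / 4) * (\<integral>\<^sup>+\<omega>. ennreal ((norm (Rv k \<omega>))^2) \<partial>M) + ennreal (\<iota>0^2 * (\<delta> k)^2)"
    by (intro add_right_mono mult_left_mono V_le_R) simp
  finally show ?thesis .
qed

end

context setting
begin

interpretation Mp: prob_space M by (rule M_prob)

definition "Phi k \<omega> = f (x k \<omega>) + hr (x k \<omega>) - mlow"

lemma Phi_meas[measurable]: "Phi k \<in> borel_measurable M" unfolding Phi_def by measurable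

lemma Phi_nonneg: "\<omega> \<in> space M \<Longrightarrow> Phi (Suc k) \<omega> \<ge> 0"
  unfolding Phi_def using phi_lb[OF h_x_fin] by simp

lemma xdiff: "\<omega> \<in> space M \<Longrightarrow> norm (x k \<omega> - x (Suc k) \<omega>) = \<alpha> * norm (Rv k \<omega>)"
  unfolding Rv_def using alpha(1) by simp

lemma aL1: "\<alpha> * L \<le> (1 - \<eta>) / 2" using aL by simp

lemma energy_pw:
  assumes \<omega>: "\<omega> \<in> space M"
  shows "Phi (Suc (Suc k)) \<omega> + \<alpha> * (1 - \<alpha> * L - \<eta> / 4) * (norm (Rv (Suc k) \<omega>))^2
     \<le> Phi (Suc k) \<omega> + (\<alpha> / \<eta>) * (norm (erv (Suc k) \<omega>))^2"
proof -
  define z where "z = x (Suc k) \<omega>"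
  define r where "r = norm (Rv (Suc k) \<omega>)"
  define e where "e = norm (erv (Suc k) \<omega>)"
  have hz: "h z \<noteq> \<infinity>" unfolding z_def by (rule h_x_fin[OF \<omega>])
  have xs: "x (Suc (Suc k)) \<omega> = pr (z - \<alpha> *\<^sub>R g (Suc k) \<omega>)" unfolding z_def using x_step[OF \<omega>] pr_def by simp
  have st: "f (x (Suc (Suc k)) \<omega>) + hr (x (Suc (Suc k)) \<omega>) + (1 / \<alpha> - L) * (norm (z - x (Suc (Suc k)) \<omega>))^2
     \<le> f z + hr z + norm (gradf z - g (Suc k) \<omega>) * norm (z - x (Suc (Suc k)) \<omega>)"
    unfolding xs by (rule step_ineq[OF hz])
  have nd: "norm (z - x (Suc (Suc k)) \<omega>) = \<alpha> * r" unfolding z_def r_def by (rule xdiff[OF \<omega>])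
  have ne: "norm (gradf z - g (Suc k) \<omega>) = e" unfolding e_def erv_def z_def ..
  have c1: "(1 / \<alpha> - L) * (\<alpha> * r)^2 = \<alpha> * (1 - \<alpha> * L) * r^2"
    using alpha(1) by (simp add: power2_eq_square field_simps)
  have c2: "e * (\<alpha> * r) \<le> \<alpha> * (\<eta> / 4 * r^2 + e^2 / \<eta>)"
  proof -
    have "0 \<le> (\<eta> / 2 * r - e)^2" by simp
    then have "e * r \<le> \<eta> / 4 * r^2 + e^2 / \<eta>"
      using eta(1) by (simp add: power2_eq_square field_simps)
    then have "\<alpha> * (e * r) \<le> \<alpha> * (\<eta> / 4 * r^2 + e^2 / \<eta>)" using alpha(1) by (intro mult_left_mono) auto
    then show ?thesis by (simp add: mult.left_commute)
  qed
  have "Phi (Suc (Suc k)) \<omega> + \<alpha> * (1 - \<alpha> * L) * r^2 \<le> Phi (Suc k) \<omega> + e * (\<alpha> * r)"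
  proof -
    have st': "f (x (Suc (Suc k)) \<omega>) + hr (x (Suc (Suc k)) \<omega>) + \<alpha> * (1 - \<alpha> * L) * r^2 \<le> f z + hr z + e * (\<alpha> * r)"
      using st by (simp only: nd ne c1)
    then show ?thesis unfolding Phi_def z_def by simp
  qed
  with c2 show ?thesis unfolding r_def[symmetric] e_def[symmetric] by (simp add: algebra_simps)
qed

lemma T_le_Phi:
  assumes \<omega>: "\<omega> \<in> space M"
  shows "\<alpha> * (1 - \<alpha> * L) * (norm (Tv (Suc k) \<omega>))^2 \<le> Phi (Suc k) \<omega>"
proof -
  define z where "z = x (Suc k) \<omega>"
  define p where "p = pr (z - \<alpha> *\<^sub>R gradf z)"
  have hz: "h z \<noteq> \<infinity>" unfolding z_def by (rule h_x_fin[OF \<omega>])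
  have st: "f p + hr p + (1 / \<alpha> - L) * (norm (z - p))^2 \<le> f z + hr z + norm (gradf z - gradf z) * norm (z - p)"
    unfolding p_def by (rule step_ineq[OF hz])
  have lb: "mlow \<le> f p + hr p" unfolding p_def by (rule phi_lb[OF pfin])
  have nT: "norm (Tv (Suc k) \<omega>) = norm (z - p) / \<alpha>" unfolding Tv_def z_def p_def using alpha(1) by simp
  have "(1 / \<alpha> - L) * (norm (z - p))^2 = \<alpha> * (1 - \<alpha> * L) * (norm (z - p) / \<alpha>)^2"
    using alpha(1) by (simp add: power2_eq_square field_simps)
  then show ?thesis using st lb unfolding nT Phi_def z_def[symmetric] by simp
qed

definition "ph = pr (x0 - \<alpha> *\<^sub>R gradf x0)"
definition "c0 = norm ((x0 - \<alpha> *\<^sub>R gradf x0) - ph)"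
definition "c1 = c0 + \<alpha> * norm (gradf ph)"
definition "K0 = f ph + hr ph - mlow + c1"
definition "K1 = c1 + 2 * \<alpha> + L * \<alpha>^2"

lemma c1_nonneg: "c1 \<ge> 0" unfolding c1_def c0_def using alpha(1) by simp
lemma K0_nonneg: "K0 \<ge> 0" unfolding K0_def ph_def using phi_lb[OF pfin] c1_nonneg by simp
lemma K1_nonneg: "K1 \<ge> 0" unfolding K1_def using c1_nonneg alpha(1) L_pos by simp

lemma phi1_bound:
  assumes \<omega>: "\<omega> \<in> space M"
  shows "Phi 1 \<omega> \<le> K0 + K1 * (norm (erv 0 \<omega>))^2"
proof -
  define u where "u = norm (erv 0 \<omega>)"
  define y where "y = x0 - \<alpha> *\<^sub>R g 0 \<omega>"
  define yh where "yh = x0 - \<alpha> *\<^sub>R gradf x0"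
  define x1 where "x1 = x 1 \<omega>"
  have x1: "x1 = pr y" unfolding x1_def y_def using x_step[OF \<omega>, of 0] x_init[OF \<omega>] pr_def by simp
  have eu: "erv 0 \<omega> = gradf x0 - g 0 \<omega>" unfolding erv_def using x_init[OF \<omega>] by simp
  have yy: "y - yh = \<alpha> *\<^sub>R erv 0 \<omega>" unfolding y_def yh_def eu by (simp add: algebra_simps)
  have nyy: "norm (y - yh) = \<alpha> * u" unfolding yy u_def using alpha(1) by simp
  have d1: "norm (x1 - ph) \<le> \<alpha> * u" unfolding x1 ph_def yh_def[symmetric] using pne[of y yh] nyy by simp
  have u0: "u \<ge> 0" unfolding u_def by simp
  have hph: "h ph \<noteq> \<infinity>" unfolding ph_def by (rule pfin)
  have vi: "h x1 + ereal (((y - x1) \<bullet> (ph - x1)) / \<alpha>) \<le> h ph" unfolding x1 by (rule pvi[OF hph])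
  then have vi': "hr x1 + ((y - x1) \<bullet> (ph - x1)) / \<alpha> \<le> hr ph"
    using hr_eq[OF hph] hr_eq[OF pfin[of y]] unfolding x1 by simp
  have ny: "norm (y - x1) \<le> 2 * \<alpha> * u + c0"
  proof -
    have e: "y - x1 = (y - yh) + ((yh - ph) + (ph - x1))" by simp
    have t1: "norm ((y - yh) + ((yh - ph) + (ph - x1))) \<le> norm (y - yh) + norm ((yh - ph) + (ph - x1))"
      by (rule norm_triangle_ineq)
    have t2: "norm ((yh - ph) + (ph - x1)) \<le> norm (yh - ph) + norm (ph - x1)" by (rule norm_triangle_ineq)
    have "norm (y - x1) \<le> norm (y - yh) + norm (yh - ph) + norm (ph - x1)"
      unfolding e using t1 t2 by linarith
    also have "norm (ph - x1) = norm (x1 - ph)" by (simp add: norm_minus_commute)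
    finally show ?thesis using nyy d1 unfolding c0_def yh_def by simp
  qed
  have "- ((y - x1) \<bullet> (ph - x1)) \<le> norm (y - x1) * norm (ph - x1)"
    using norm_cauchy_schwarz[of "y - x1" "x1 - ph"] by (simp add: inner_diff_right norm_minus_commute)
  also have "\<dots> \<le> (2 * \<alpha> * u + c0) * (\<alpha> * u)"
    using ny d1 u0 alpha(1) by (intro mult_mono) (auto simp: norm_minus_commute c0_def)
  finally have ip: "- ((y - x1) \<bullet> (ph - x1)) \<le> (2 * \<alpha> * u + c0) * (\<alpha> * u)" .
  have "- (((y - x1) \<bullet> (ph - x1)) / \<alpha>) \<le> (2 * \<alpha> * u + c0) * u"
  proof -
    have "- (((y - x1) \<bullet> (ph - x1)) / \<alpha>) = (- ((y - x1) \<bullet> (ph - x1))) / \<alpha>" by simp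
    also have "\<dots> \<le> ((2 * \<alpha> * u + c0) * (\<alpha> * u)) / \<alpha>" using ip alpha(1) by (intro divide_right_mono) auto
    also have "\<dots> = (2 * \<alpha> * u + c0) * u" using alpha(1) by simp
    finally show ?thesis .
  qed
  with vi' have hx1: "hr x1 \<le> hr ph + (2 * \<alpha> * u + c0) * u" by linarith
  have fx1: "f x1 \<le> f ph + gradf ph \<bullet> (x1 - ph) + L * (norm (x1 - ph))^2" by (rule descent)
  have "gradf ph \<bullet> (x1 - ph) \<le> norm (gradf ph) * norm (x1 - ph)" by (rule norm_cauchy_schwarz)
  also have "\<dots> \<le> norm (gradf ph) * (\<alpha> * u)" using d1 by (intro mult_left_mono) auto
  finally have g1: "gradf ph \<bullet> (x1 - ph) \<le> norm (gradf ph) * (\<alpha> * u)" .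
  have "L * (norm (x1 - ph))^2 \<le> L * (\<alpha> * u)^2"
    using d1 L_pos by (intro mult_left_mono power_mono) auto
  then have fx1': "f x1 \<le> f ph + norm (gradf ph) * (\<alpha> * u) + L * (\<alpha> * u)^2" using fx1 g1 by linarith
  have uu: "u \<le> 1 + u^2"
  proof -
    have "0 \<le> (u - 1)^2" by simp
    then have "2 * u \<le> 1 + u^2" by (simp add: power2_eq_square algebra_simps)
    then show ?thesis using u0 by linarith
  qed
  have "c1 * u \<le> c1 * (1 + u^2)" using uu c1_nonneg by (intro mult_left_mono) auto
  moreover have "Phi 1 \<omega> \<le> f ph + hr ph - mlow + c1 * u + (2 * \<alpha> + L * \<alpha>^2) * u^2"
    using fx1' hx1 unfolding Phi_def x1_def[symmetric] c1_def
    by (simp add: power2_eq_square algebra_simps)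
  ultimately show ?thesis unfolding K0_def K1_def u_def[symmetric] by (simp add: algebra_simps)
qed

lemma nn_lin: "a \<ge> 0 \<Longrightarrow> b \<ge> 0 \<Longrightarrow> ennreal (a + c * b) = ennreal a + ennreal c * ennreal b" if "c \<ge> 0" for a b c :: real
  using that by (simp add: ennreal_mult)

lemma IPhi1: "(\<integral>\<^sup>+\<omega>. ennreal (Phi 1 \<omega>) \<partial>M) \<le> ennreal (K0 + K1 * \<sigma>^2)"
proof -
  have "(\<integral>\<^sup>+\<omega>. ennreal (Phi 1 \<omega>) \<partial>M) \<le> (\<integral>\<^sup>+\<omega>. ennreal K0 + ennreal K1 * ennreal ((norm (erv 0 \<omega>))^2) \<partial>M)"
  proof (rule nn_integral_mono)
    fix \<omega> assume \<omega>: "\<omega> \<in> space M"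
    have "ennreal (Phi 1 \<omega>) \<le> ennreal (K0 + K1 * (norm (erv 0 \<omega>))^2)" by (rule ennreal_leI[OF phi1_bound[OF \<omega>]])
    also have "\<dots> = ennreal K0 + ennreal K1 * ennreal ((norm (erv 0 \<omega>))^2)"
      using K0_nonneg K1_nonneg by (simp add: ennreal_mult)
    finally show "ennreal (Phi 1 \<omega>) \<le> ennreal K0 + ennreal K1 * ennreal ((norm (erv 0 \<omega>))^2)" .
  qed
  also have "\<dots> = ennreal K0 + ennreal K1 * (\<integral>\<^sup>+\<omega>. ennreal ((norm (erv 0 \<omega>))^2) \<partial>M)"
    by (simp add: nn_integral_add nn_integral_cmult Mp.emeasure_space_1)
  also have "\<dots> \<le> ennreal K0 + ennreal K1 * ennreal (\<sigma>^2)"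
    by (intro add_left_mono mult_left_mono e_int_sigma) simp
  also have "\<dots> = ennreal (K0 + K1 * \<sigma>^2)" using K0_nonneg K1_nonneg by (simp add: ennreal_mult)
  finally show ?thesis .
qed

definition "a1 = \<alpha> * (1 - \<alpha> * L - \<eta> / 4)"
definition "b1 = \<alpha> / \<eta>"

lemma a1_pos: "a1 \<ge> 0" unfolding a1_def using alpha(1) aL1 eta by (intro mult_nonneg_nonneg) auto
lemma b1_pos: "b1 \<ge> 0" unfolding b1_def using alpha(1) eta by simp

lemma energy_int:
  "(\<integral>\<^sup>+\<omega>. ennreal (Phi (Suc (Suc j)) \<omega>) \<partial>M) + ennreal a1 * (\<integral>\<^sup>+\<omega>. ennreal ((norm (Rv (Suc j) \<omega>))^2) \<partial>M)
   \<le> (\<integral>\<^sup>+\<omega>. ennreal (Phi (Suc j) \<omega>) \<partial>M) + ennreal b1 * (\<integral>\<^sup>+\<omega>. ennreal ((norm (erv (Suc j) \<omega>))^2) \<partial>M)"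
proof -
  have "(\<integral>\<^sup>+\<omega>. ennreal (Phi (Suc (Suc j)) \<omega>) \<partial>M) + ennreal a1 * (\<integral>\<^sup>+\<omega>. ennreal ((norm (Rv (Suc j) \<omega>))^2) \<partial>M)
      = (\<integral>\<^sup>+\<omega>. ennreal (Phi (Suc (Suc j)) \<omega>) + ennreal a1 * ennreal ((norm (Rv (Suc j) \<omega>))^2) \<partial>M)"
    by (simp add: nn_integral_add nn_integral_cmult)
  also have "\<dots> \<le> (\<integral>\<^sup>+\<omega>. ennreal (Phi (Suc j) \<omega>) + ennreal b1 * ennreal ((norm (erv (Suc j) \<omega>))^2) \<partial>M)"
  proof (rule nn_integral_mono)
    fix \<omega> assume \<omega>: "\<omega> \<in> space M"
    have "ennreal (Phi (Suc (Suc j)) \<omega>) + ennreal a1 * ennreal ((norm (Rv (Suc j) \<omega>))^2)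
        = ennreal (Phi (Suc (Suc j)) \<omega> + a1 * (norm (Rv (Suc j) \<omega>))^2)"
      using Phi_nonneg[OF \<omega>, of "Suc j"] a1_pos by (simp add: ennreal_mult)
    also have "\<dots> \<le> ennreal (Phi (Suc j) \<omega> + b1 * (norm (erv (Suc j) \<omega>))^2)"
      using energy_pw[OF \<omega>, of j] unfolding a1_def b1_def by (intro ennreal_leI) simp
    also have "\<dots> = ennreal (Phi (Suc j) \<omega>) + ennreal b1 * ennreal ((norm (erv (Suc j) \<omega>))^2)"
      using Phi_nonneg[OF \<omega>, of j] b1_pos by (simp add: ennreal_mult)
    finally show "ennreal (Phi (Suc (Suc j)) \<omega>) + ennreal a1 * ennreal ((norm (Rv (Suc j) \<omega>))^2)
        \<le> ennreal (Phi (Suc j) \<omega>) + ennreal b1 * ennreal ((norm (erv (Suc j) \<omega>))^2)" .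
  qed
  also have "\<dots> = (\<integral>\<^sup>+\<omega>. ennreal (Phi (Suc j) \<omega>) \<partial>M) + ennreal b1 * (\<integral>\<^sup>+\<omega>. ennreal ((norm (erv (Suc j) \<omega>))^2) \<partial>M)"
    by (simp add: nn_integral_add nn_integral_cmult)
  finally show ?thesis .
qed

lemma IPhi_fin: "(\<integral>\<^sup>+\<omega>. ennreal (Phi (Suc j) \<omega>) \<partial>M) < \<infinity>"
proof (induction j)
  case 0
  then show ?case using IPhi1 by (simp add: le_less_trans)
next
  case (Suc j)
  have "(\<integral>\<^sup>+\<omega>. ennreal (Phi (Suc (Suc j)) \<omega>) \<partial>M)
      \<le> (\<integral>\<^sup>+\<omega>. ennreal (Phi (Suc j) \<omega>) \<partial>M) + ennreal b1 * (\<integral>\<^sup>+\<omega>. ennreal ((norm (erv (Suc j) \<omega>))^2) \<partial>M)"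
    using energy_int[of j] by (rule order_trans[rotated]) simp
  also have "\<dots> \<le> (\<integral>\<^sup>+\<omega>. ennreal (Phi (Suc j) \<omega>) \<partial>M) + ennreal b1 * ennreal (\<sigma>^2)"
    by (intro add_left_mono mult_left_mono e_int_sigma) simp
  also have "\<dots> < \<infinity>" using Suc.IH by (simp add: ennreal_mult_less_top)
  finally show ?case .
qed

lemma IT_le_R:
  "(\<integral>\<^sup>+\<omega>. ennreal ((norm (Tv k \<omega>))^2) \<partial>M)
    \<le> 2 * (\<integral>\<^sup>+\<omega>. ennreal ((norm (Rv k \<omega>))^2) \<partial>M) + 2 * (\<integral>\<^sup>+\<omega>. ennreal ((norm (erv k \<omega>))^2) \<partial>M)"
proof -
  have "(\<integral>\<^sup>+\<omega>. ennreal ((norm (Tv k \<omega>))^2) \<partial>M) \<le> (\<integral>\<^sup>+\<omega>. 2 * ennreal ((norm (Rv k \<omega>))^2) + 2 * ennreal ((norm (erv k \<omega>))^2) \<partial>M)"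
  proof (rule nn_integral_mono)
    fix \<omega> assume \<omega>: "\<omega> \<in> space M"
    have "norm (Tv k \<omega>) \<le> norm (Rv k \<omega>) + norm (erv k \<omega>)"
      using TR_le_e[OF \<omega>, of k] norm_triangle_sub[of "Tv k \<omega>" "Rv k \<omega>"] by linarith
    then have "(norm (Tv k \<omega>))^2 \<le> (norm (Rv k \<omega>) + norm (erv k \<omega>))^2" by (intro power_mono) auto
    also have "\<dots> \<le> 2 * (norm (Rv k \<omega>))^2 + 2 * (norm (erv k \<omega>))^2"
      using sum_squares_bound[of "norm (Rv k \<omega>)" "norm (erv k \<omega>)"] by (simp add: power2_eq_square algebra_simps)
    finally have "ennreal ((norm (Tv k \<omega>))^2) \<le> ennreal (2 * (norm (Rv k \<omega>))^2 + 2 * (norm (erv k \<omega>))^2)"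
      by (rule ennreal_leI)
    then show "ennreal ((norm (Tv k \<omega>))^2) \<le> 2 * ennreal ((norm (Rv k \<omega>))^2) + 2 * ennreal ((norm (erv k \<omega>))^2)"
      by (simp add: ennreal_mult)
  qed
  also have "\<dots> = 2 * (\<integral>\<^sup>+\<omega>. ennreal ((norm (Rv k \<omega>))^2) \<partial>M) + 2 * (\<integral>\<^sup>+\<omega>. ennreal ((norm (erv k \<omega>))^2) \<partial>M)"
    by (simp add: nn_integral_add nn_integral_cmult)
  finally show ?thesis .
qed

lemma IR_fin: "(\<integral>\<^sup>+\<omega>. ennreal ((norm (Rv (Suc j) \<omega>))^2) \<partial>M) < \<infinity>"
proof -
  define c where "c = 1 / (\<alpha> * (1 - \<alpha> * L))"
  have den: "\<alpha> * (1 - \<alpha> * L) > 0" using alpha(1) aL1 eta by (intro mult_pos_pos) auto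
  have "(\<integral>\<^sup>+\<omega>. ennreal ((norm (Rv (Suc j) \<omega>))^2) \<partial>M)
      \<le> (\<integral>\<^sup>+\<omega>. 2 * ennreal c * ennreal (Phi (Suc j) \<omega>) + 2 * ennreal ((norm (erv (Suc j) \<omega>))^2) \<partial>M)"
  proof (rule nn_integral_mono)
    fix \<omega> assume \<omega>: "\<omega> \<in> space M"
    have t: "(norm (Tv (Suc j) \<omega>))^2 \<le> c * Phi (Suc j) \<omega>"
      using T_le_Phi[OF \<omega>, of j] den unfolding c_def by (simp add: field_simps)
    have "norm (Rv (Suc j) \<omega>) \<le> norm (Tv (Suc j) \<omega>) + norm (erv (Suc j) \<omega>)"
      using TR_le_e[OF \<omega>, of "Suc j"] norm_triangle_sub[of "Rv (Suc j) \<omega>" "Tv (Suc j) \<omega>"]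
      by (simp add: norm_minus_commute)
    then have "(norm (Rv (Suc j) \<omega>))^2 \<le> (norm (Tv (Suc j) \<omega>) + norm (erv (Suc j) \<omega>))^2" by (intro power_mono) auto
    also have "\<dots> \<le> 2 * (norm (Tv (Suc j) \<omega>))^2 + 2 * (norm (erv (Suc j) \<omega>))^2"
      using sum_squares_bound[of "norm (Tv (Suc j) \<omega>)" "norm (erv (Suc j) \<omega>)"] by (simp add: power2_eq_square algebra_simps)
    also have "\<dots> \<le> 2 * (c * Phi (Suc j) \<omega>) + 2 * (norm (erv (Suc j) \<omega>))^2" using t by simp
    finally have "ennreal ((norm (Rv (Suc j) \<omega>))^2) \<le> ennreal (2 * (c * Phi (Suc j) \<omega>) + 2 * (norm (erv (Suc j) \<omega>))^2)"
      by (rule ennreal_leI)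
    also have "\<dots> = 2 * ennreal c * ennreal (Phi (Suc j) \<omega>) + 2 * ennreal ((norm (erv (Suc j) \<omega>))^2)"
    proof -
      have c0': "c \<ge> 0" using den unfolding c_def by simp
      have P0: "Phi (Suc j) \<omega> \<ge> 0" by (rule Phi_nonneg[OF \<omega>])
      have "ennreal (2 * (c * Phi (Suc j) \<omega>) + 2 * (norm (erv (Suc j) \<omega>))^2)
          = ennreal (2 * (c * Phi (Suc j) \<omega>)) + ennreal (2 * (norm (erv (Suc j) \<omega>))^2)"
        using c0' P0 by (intro ennreal_plus) auto
      also have "ennreal (2 * (c * Phi (Suc j) \<omega>)) = 2 * ennreal c * ennreal (Phi (Suc j) \<omega>)"
        using c0' P0 by (simp add: ennreal_mult mult.assoc)
      also have "ennreal (2 * (norm (erv (Suc j) \<omega>))^2) = 2 * ennreal ((norm (erv (Suc j) \<omega>))^2)"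
        by (simp add: ennreal_mult)
      finally show ?thesis .
    qed
    finally show "ennreal ((norm (Rv (Suc j) \<omega>))^2) \<le> 2 * ennreal c * ennreal (Phi (Suc j) \<omega>) + 2 * ennreal ((norm (erv (Suc j) \<omega>))^2)" .
  qed
  also have "\<dots> = 2 * ennreal c * (\<integral>\<^sup>+\<omega>. ennreal (Phi (Suc j) \<omega>) \<partial>M) + 2 * (\<integral>\<^sup>+\<omega>. ennreal ((norm (erv (Suc j) \<omega>))^2) \<partial>M)"
    by (simp add: nn_integral_add nn_integral_cmult mult.assoc)
  also have "\<dots> < \<infinity>"
  proof -
    have "(\<integral>\<^sup>+\<omega>. ennreal ((norm (erv (Suc j) \<omega>))^2) \<partial>M) < \<infinity>" using e_int_sigma[of "Suc j"] by (simp add: le_less_trans)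
    then show ?thesis using IPhi_fin[of j] by (simp add: ennreal_mult_less_top)
  qed
  finally show ?thesis .
qed

end

context setting
begin

interpretation Mp: prob_space M by (rule M_prob)

abbreviation "IP j \<equiv> (\<integral>\<^sup>+\<omega>. ennreal (Phi (Suc j) \<omega>) \<partial>M)"
abbreviation "IR j \<equiv> (\<integral>\<^sup>+\<omega>. ennreal ((norm (Rv (Suc j) \<omega>))^2) \<partial>M)"
abbreviation "IE j \<equiv> (\<integral>\<^sup>+\<omega>. ennreal ((norm (erv (Suc j) \<omega>))^2) \<partial>M)"
abbreviation "IT j \<equiv> (\<integral>\<^sup>+\<omega>. ennreal ((norm (Tv (Suc j) \<omega>))^2) \<partial>M)"

definition "phs j = enn2real (IP j)"
definition "rs j = enn2real (IR j)"
definition "es j = enn2real (IE j)"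
definition "ts j = enn2real (IT j)"

lemma IE_fin: "IE j < \<infinity>" using e_int_sigma[of "Suc j"] by (simp add: le_less_trans)

lemma IT_fin: "IT j < \<infinity>"
proof -
  have "IT j \<le> 2 * IR j + 2 * IE j" by (rule IT_le_R)
  also have "\<dots> < \<infinity>" using IR_fin[of j] IE_fin[of j] by (simp add: ennreal_mult_less_top)
  finally show ?thesis .
qed

lemma IP_eq: "IP j = ennreal (phs j)" unfolding phs_def using IPhi_fin[of j] by simp
lemma IR_eq: "IR j = ennreal (rs j)" unfolding rs_def using IR_fin[of j] by simp
lemma IE_eq: "IE j = ennreal (es j)" unfolding es_def using IE_fin[of j] by simp
lemma IT_eq: "IT j = ennreal (ts j)" unfolding ts_def using IT_fin[of j] by simp

lemma phs_nonneg: "phs j \<ge> 0" unfolding phs_def by simp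
lemma rs_nonneg: "rs j \<ge> 0" unfolding rs_def by simp
lemma es_nonneg: "es j \<ge> 0" unfolding es_def by simp

lemma es_le: "es j \<le> \<eta>^2 / 4 * rs j + \<iota>0^2 * (\<delta> (Suc j))^2"
proof -
  have "ennreal (es j) \<le> ennreal (\<eta>^2 / 4) * ennreal (rs j) + ennreal (\<iota>0^2 * (\<delta> (Suc j))^2)"
    using e_int_D[of "Suc j"] unfolding IE_eq[symmetric] IR_eq[symmetric] .
  also have "\<dots> = ennreal (\<eta>^2 / 4 * rs j + \<iota>0^2 * (\<delta> (Suc j))^2)"
  proof -
    have a: "ennreal (\<eta>^2 / 4 * rs j) = ennreal (\<eta>^2 / 4) * ennreal (rs j)"
      by (rule ennreal_mult) (auto simp: rs_nonneg)
    have b: "ennreal (\<eta>^2 / 4 * rs j + \<iota>0^2 * (\<delta> (Suc j))^2) = ennreal (\<eta>^2 / 4 * rs j) + ennreal (\<iota>0^2 * (\<delta> (Suc j))^2)"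
      by (rule ennreal_plus) (auto simp: rs_nonneg)
    show ?thesis unfolding b a ..
  qed
  finally have fi: "ennreal (es j) \<le> ennreal (\<eta>^2 / 4 * rs j + \<iota>0^2 * (\<delta> (Suc j))^2)" .
  have nn: "0 \<le> \<eta>^2 / 4 * rs j + \<iota>0^2 * (\<delta> (Suc j))^2" using rs_nonneg[of j] by simp
  show ?thesis using fi ennreal_le_iff[OF nn] by simp
qed

lemma rec_real: "phs (Suc j) + a1 * rs j \<le> phs j + b1 * es j"
proof -
  have "ennreal (phs (Suc j) + a1 * rs j) = ennreal (phs (Suc j)) + ennreal a1 * ennreal (rs j)"
    using phs_nonneg[of "Suc j"] rs_nonneg[of j] a1_pos by (simp add: ennreal_mult)
  also have "\<dots> \<le> ennreal (phs j) + ennreal b1 * ennreal (es j)"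
    using energy_int[of j] unfolding IP_eq IR_eq IE_eq .
  also have "\<dots> = ennreal (phs j + b1 * es j)"
    using phs_nonneg[of j] es_nonneg[of j] b1_pos by (simp add: ennreal_mult)
  finally show ?thesis
    by (subst (asm) ennreal_le_iff) (use phs_nonneg es_nonneg b1_pos in auto)
qed

lemma rec2: "phs (Suc j) + \<alpha> / 2 * rs j \<le> phs j + b1 * \<iota>0^2 * (\<delta> (Suc j))^2"
proof -
  have "b1 * es j \<le> b1 * (\<eta>^2 / 4 * rs j + \<iota>0^2 * (\<delta> (Suc j))^2)"
    using es_le[of j] b1_pos by (intro mult_left_mono) auto
  also have "\<dots> = \<alpha> * \<eta> / 4 * rs j + b1 * \<iota>0^2 * (\<delta> (Suc j))^2"
    unfolding b1_def using eta(1) by (simp add: power2_eq_square field_simps)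
  finally have "phs (Suc j) + a1 * rs j \<le> phs j + \<alpha> * \<eta> / 4 * rs j + b1 * \<iota>0^2 * (\<delta> (Suc j))^2"
    using rec_real[of j] by linarith
  moreover have "\<alpha> / 2 * rs j \<le> (a1 - \<alpha> * \<eta> / 4) * rs j"
  proof (rule mult_right_mono[OF _ rs_nonneg])
    have "a1 - \<alpha> * \<eta> / 4 = \<alpha> * (1 - \<alpha> * L - \<eta> / 2)" unfolding a1_def by (simp add: algebra_simps)
    also have "\<dots> \<ge> \<alpha> * (1 / 2)" using aL1 alpha(1) by (intro mult_left_mono) auto
    finally show "\<alpha> / 2 \<le> a1 - \<alpha> * \<eta> / 4" by simp
  qed
  ultimately show ?thesis by (simp add: algebra_simps)
qed

lemma ts_le: "ts j \<le> 3 * rs j + 2 * \<iota>0^2 * (\<delta> (Suc j))^2"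
proof -
  have "ennreal (ts j) \<le> 2 * ennreal (rs j) + 2 * ennreal (es j)"
    using IT_le_R[of "Suc j"] unfolding IT_eq IR_eq IE_eq .
  also have "\<dots> = ennreal (2 * rs j + 2 * es j)" using rs_nonneg[of j] es_nonneg[of j] by (simp add: ennreal_mult)
  finally have "ts j \<le> 2 * rs j + 2 * es j"
    by (subst (asm) ennreal_le_iff) (use rs_nonneg es_nonneg in auto)
  also have "\<dots> \<le> 2 * rs j + 2 * (\<eta>^2 / 4 * rs j + \<iota>0^2 * (\<delta> (Suc j))^2)" using es_le[of j] by (intro add_left_mono mult_left_mono) auto
  also have "\<dots> \<le> 3 * rs j + 2 * \<iota>0^2 * (\<delta> (Suc j))^2"
  proof -
    have "\<eta>^2 \<le> 1" using eta by (simp add: power_le_one)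
    then have "\<eta>^2 / 2 * rs j \<le> 1 * rs j" using rs_nonneg[of j] by (intro mult_right_mono) auto
    then show ?thesis by (simp add: algebra_simps)
  qed
  finally show ?thesis .
qed

definition "Ssum = suminf (\<lambda>k. (\<delta> k)^2)"

lemma sum_delta_le: "(\<Sum>j<K. (\<delta> (Suc j))^2) \<le> Ssum"
proof -
  have "(\<Sum>j<K. (\<delta> (Suc j))^2) = (\<Sum>k\<in>Suc ` {..<K}. (\<delta> k)^2)" by (simp add: sum.reindex)
  also have "\<dots> \<le> Ssum" unfolding Ssum_def by (rule sum_le_suminf[OF delta_sq]) auto
  finally show ?thesis .
qed

lemma Ssum_nonneg: "Ssum \<ge> 0" unfolding Ssum_def by (rule suminf_nonneg[OF delta_sq]) simp

lemma tele: "\<alpha> / 2 * (\<Sum>j<K. rs j) \<le> phs 0 - phs K + b1 * \<iota>0^2 * (\<Sum>j<K. (\<delta> (Suc j))^2)"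
proof (induction K)
  case 0 then show ?case by simp
next
  case (Suc K)
  have "\<alpha> / 2 * (\<Sum>j<Suc K. rs j) = \<alpha> / 2 * (\<Sum>j<K. rs j) + \<alpha> / 2 * rs K" by (simp add: algebra_simps)
  also have "\<dots> \<le> phs 0 - phs K + b1 * \<iota>0^2 * (\<Sum>j<K. (\<delta> (Suc j))^2) + \<alpha> / 2 * rs K" using Suc.IH by simp
  also have "\<dots> \<le> phs 0 - phs (Suc K) + b1 * \<iota>0^2 * (\<Sum>j<Suc K. (\<delta> (Suc j))^2)"
    using rec2[of K] by (simp add: algebra_simps)
  finally show ?case .
qed

definition "Bc = 3 * (2 / \<alpha>) * (phs 0 + b1 * \<iota>0^2 * Ssum) + 2 * \<iota>0^2 * Ssum"

lemma Bc_nonneg: "Bc \<ge> 0"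
  unfolding Bc_def using phs_nonneg[of 0] b1_pos Ssum_nonneg alpha(1) by (intro add_nonneg_nonneg mult_nonneg_nonneg) auto

lemma sum_ts: "(\<Sum>j<K. ts j) \<le> Bc"
proof -
  have bq: "b1 * \<iota>0^2 * (\<Sum>j<K. (\<delta> (Suc j))^2) \<le> b1 * \<iota>0^2 * Ssum"
    using sum_delta_le[of K] b1_pos by (intro mult_left_mono) auto
  have r: "(\<Sum>j<K. rs j) \<le> (2 / \<alpha>) * (phs 0 + b1 * \<iota>0^2 * Ssum)"
  proof -
    have "\<alpha> / 2 * (\<Sum>j<K. rs j) \<le> phs 0 + b1 * \<iota>0^2 * Ssum" using tele[of K] phs_nonneg[of K] bq by linarith
    then show ?thesis using alpha(1) by (simp add: field_simps)
  qed
  have "(\<Sum>j<K. ts j) \<le> (\<Sum>j<K. 3 * rs j + 2 * \<iota>0^2 * (\<delta> (Suc j))^2)" by (rule sum_mono) (rule ts_le)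
  also have "\<dots> = 3 * (\<Sum>j<K. rs j) + 2 * \<iota>0^2 * (\<Sum>j<K. (\<delta> (Suc j))^2)"
    by (simp add: sum.distrib sum_distrib_left)
  also have "\<dots> \<le> 3 * ((2 / \<alpha>) * (phs 0 + b1 * \<iota>0^2 * Ssum)) + 2 * \<iota>0^2 * Ssum"
    using r sum_delta_le[of K] by (intro add_mono mult_left_mono) auto
  finally show ?thesis unfolding Bc_def by simp
qed

lemma exists_stop:
  assumes e: "\<epsilon> > 0"
  shows "\<exists>k. 1 \<le> k \<and> k \<le> nat \<lceil>Bc / \<epsilon>\<rceil> + 1 \<and>
     (\<integral>\<^sup>+\<omega>. ennreal ((norm (Tv k \<omega>))^2) \<partial>M) \<le> ennreal \<epsilon>"
proof (rule ccontr)
  assume na: "\<not> ?thesis"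
  define K where "K = nat \<lceil>Bc / \<epsilon>\<rceil> + 1"
  have big: "ts j > \<epsilon>" if "j < K" for j
  proof (rule ccontr)
    assume "\<not> ts j > \<epsilon>"
    then have "IT j \<le> ennreal \<epsilon>" unfolding IT_eq by (simp add: ennreal_leI)
    moreover have "1 \<le> Suc j" "Suc j \<le> K" using that by auto
    ultimately show False using na unfolding K_def by blast
  qed
  have "(\<Sum>j<K. \<epsilon>) < (\<Sum>j<K. ts j)" by (rule sum_strict_mono) (auto simp: K_def big)
  also have "\<dots> \<le> Bc" by (rule sum_ts)
  finally have "real K * \<epsilon> < Bc" by simp
  moreover have "Bc / \<epsilon> \<le> real K" unfolding K_def by linarith
  then have "Bc \<le> real K * \<epsilon>" using e by (simp add: field_simps)
  ultimately show False by simp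
qed

definition "Cn = 1 + \<sigma>^2 * (2 + 8 / \<eta>^2)"

lemma Cn_pos: "Cn \<ge> 1" unfolding Cn_def using eta(1) by simp

lemma path_bound:
  assumes e: "0 < \<epsilon>" "\<epsilon> \<le> 1"
  shows "AE \<omega> in M. \<forall>k. \<epsilon> < (norm (Tv k \<omega>))^2 \<longrightarrow> real (N k \<omega>) \<le> Cn / \<epsilon>"
proof (subst AE_all_countable, intro allI)
  fix k
  show "AE \<omega> in M. \<epsilon> < (norm (Tv k \<omega>))^2 \<longrightarrow> real (N k \<omega>) \<le> Cn / \<epsilon>"
    using TV_AE[of k] sample_rule[of k]
  proof eventually_elim
    case (elim \<omega>)
    show ?case
    proof
      assume lt: "\<epsilon> < (norm (Tv k \<omega>))^2"
      define D where "D = Dv k \<omega>"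
      define c where "c = 2 + 8 / \<eta>^2"
      have c0: "c > 0" unfolding c_def using eta(1) by (simp add: add_pos_nonneg)
      have TV: "(norm (Tv k \<omega> - Vv k \<omega>))^2 \<le> D" using elim(1) wv_le_D[of k \<omega>] unfolding D_def by linarith
      have VD: "\<eta>^2 / 4 * (norm (Vv k \<omega>))^2 \<le> D" unfolding D_def Dv_def by simp
      have V4: "(norm (Vv k \<omega>))^2 \<le> 4 / \<eta>^2 * D"
        using VD eta(1) by (simp add: field_simps)
      have "norm (Tv k \<omega>) \<le> norm (Vv k \<omega>) + norm (Tv k \<omega> - Vv k \<omega>)"
        using norm_triangle_ineq[of "Vv k \<omega>" "Tv k \<omega> - Vv k \<omega>"] by simp
      then have "(norm (Tv k \<omega>))^2 \<le> (norm (Vv k \<omega>) + norm (Tv k \<omega> - Vv k \<omega>))^2" by (intro power_mono) auto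
      also have "\<dots> \<le> 2 * (norm (Vv k \<omega>))^2 + 2 * (norm (Tv k \<omega> - Vv k \<omega>))^2"
        using sum_squares_bound[of "norm (Vv k \<omega>)" "norm (Tv k \<omega> - Vv k \<omega>)"] by (simp add: power2_eq_square algebra_simps)
      also have "\<dots> \<le> 2 * (4 / \<eta>^2 * D) + 2 * D" using V4 TV by linarith
      also have "\<dots> = c * D" unfolding c_def by (simp add: algebra_simps)
      finally have TcD: "(norm (Tv k \<omega>))^2 \<le> c * D" .
      have epsD: "\<epsilon> < c * D" using lt TcD by linarith
      then have D0: "D > 0" using c0 e(1) by (metis mult_le_0_iff not_less order.strict_trans2 less_le_not_le zero_less_mult_pos2 le_less)
      have NN: "N k \<omega> = Nm k \<omega>"
        using elim(2) D0 unfolding Let_def Dv_eq[symmetric] D_def Nm_def by auto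
      have "real (N k \<omega>) \<le> 1 + \<sigma>^2 / D" unfolding NN D_def by (rule Nm_le) (use D0 D_def in simp)
      also have "\<sigma>^2 / D \<le> \<sigma>^2 * c / \<epsilon>"
      proof -
        have "1 / D \<le> c / \<epsilon>" using epsD D0 e(1) by (simp add: field_simps)
        then have "\<sigma>^2 * (1 / D) \<le> \<sigma>^2 * (c / \<epsilon>)" by (intro mult_left_mono) auto
        then show ?thesis by simp
      qed
      also have "1 + \<sigma>^2 * c / \<epsilon> \<le> Cn / \<epsilon>"
      proof -
        have "1 \<le> 1 / \<epsilon>" using e by (simp add: field_simps)
        then have "1 + \<sigma>^2 * c / \<epsilon> \<le> 1 / \<epsilon> + \<sigma>^2 * c / \<epsilon>" by simp
        also have "\<dots> = Cn / \<epsilon>" unfolding Cn_def c_def by (simp add: add_divide_distrib)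
        finally show ?thesis .
      qed
      finally show "real (N k \<omega>) \<le> Cn / \<epsilon>" by simp
    qed
  qed
qed

lemma main_bound:
  "\<exists>C\<ge>0. \<forall>\<epsilon>. 0 < \<epsilon> \<and> \<epsilon> < 1 \<longrightarrow>
     (AE \<omega> in M.
        let stop = (\<lambda>k. (\<integral>\<^sup>+ \<omega>'. ennreal ((norm ((1 / \<alpha>) *\<^sub>R (x k \<omega>' - prox \<alpha> h (x k \<omega>' - \<alpha> *\<^sub>R gradf (x k \<omega>')))))^2) \<partial>M) \<le> ennreal \<epsilon>
                   \<or> (norm ((1 / \<alpha>) *\<^sub>R (x k \<omega> - prox \<alpha> h (x k \<omega> - \<alpha> *\<^sub>R gradf (x k \<omega>)))))^2 \<le> \<epsilon>)
        in (\<exists>k. stop k) \<and>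
           (\<Sum>k<(LEAST k. stop k). real (N k \<omega>)) \<le> C * \<epsilon> powr (-2))"
proof (intro exI[of _ "(Bc + 2) * Cn"] conjI allI impI)
  show "(Bc + 2) * Cn \<ge> 0" using Bc_nonneg Cn_pos by simp
  fix \<epsilon> :: real assume e: "0 < \<epsilon> \<and> \<epsilon> < 1"
  obtain k0 where k0: "1 \<le> k0" "k0 \<le> nat \<lceil>Bc / \<epsilon>\<rceil> + 1"
      "(\<integral>\<^sup>+\<omega>. ennreal ((norm (Tv k0 \<omega>))^2) \<partial>M) \<le> ennreal \<epsilon>"
    using exists_stop[of \<epsilon>] e by auto
  have Tfun: "(\<lambda>\<omega>'. (1 / \<alpha>) *\<^sub>R (x k \<omega>' - prox \<alpha> h (x k \<omega>' - \<alpha> *\<^sub>R gradf (x k \<omega>')))) = Tv k" for k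
    by (rule ext) (simp add: Tv_def pr_def)
  show "AE \<omega> in M.
        let stop = (\<lambda>k. (\<integral>\<^sup>+ \<omega>'. ennreal ((norm ((1 / \<alpha>) *\<^sub>R (x k \<omega>' - prox \<alpha> h (x k \<omega>' - \<alpha> *\<^sub>R gradf (x k \<omega>')))))^2) \<partial>M) \<le> ennreal \<epsilon>
                   \<or> (norm ((1 / \<alpha>) *\<^sub>R (x k \<omega> - prox \<alpha> h (x k \<omega> - \<alpha> *\<^sub>R gradf (x k \<omega>)))))^2 \<le> \<epsilon>)
        in (\<exists>k. stop k) \<and>
           (\<Sum>k<(LEAST k. stop k). real (N k \<omega>)) \<le> (Bc + 2) * Cn * \<epsilon> powr (-2)"
    using path_bound[of \<epsilon>] e
  proof -
    have pb: "AE \<omega> in M. \<forall>k. \<epsilon> < (norm (Tv k \<omega>))^2 \<longrightarrow> real (N k \<omega>) \<le> Cn / \<epsilon>"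
      using path_bound[of \<epsilon>] e by simp
    then show ?thesis
  proof eventually_elim
    case (elim \<omega>)
    define stop where "stop k = ((\<integral>\<^sup>+\<omega>'. ennreal ((norm (Tv k \<omega>'))^2) \<partial>M) \<le> ennreal \<epsilon> \<or> (norm (Tv k \<omega>))^2 \<le> \<epsilon>)" for k
    have eqs: "(\<lambda>k. (\<integral>\<^sup>+ \<omega>'. ennreal ((norm ((1 / \<alpha>) *\<^sub>R (x k \<omega>' - prox \<alpha> h (x k \<omega>' - \<alpha> *\<^sub>R gradf (x k \<omega>')))))^2) \<partial>M) \<le> ennreal \<epsilon>
                   \<or> (norm ((1 / \<alpha>) *\<^sub>R (x k \<omega> - prox \<alpha> h (x k \<omega> - \<alpha> *\<^sub>R gradf (x k \<omega>)))))^2 \<le> \<epsilon>) = stop"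
    proof (rule ext)
      fix k
      have t1: "(\<lambda>\<omega>'. ennreal ((norm ((1 / \<alpha>) *\<^sub>R (x k \<omega>' - prox \<alpha> h (x k \<omega>' - \<alpha> *\<^sub>R gradf (x k \<omega>')))))^2))
          = (\<lambda>\<omega>'. ennreal ((norm (Tv k \<omega>'))^2))" by (rule ext) (simp add: Tv_def pr_def)
      show "((\<integral>\<^sup>+ \<omega>'. ennreal ((norm ((1 / \<alpha>) *\<^sub>R (x k \<omega>' - prox \<alpha> h (x k \<omega>' - \<alpha> *\<^sub>R gradf (x k \<omega>')))))^2) \<partial>M) \<le> ennreal \<epsilon>
                   \<or> (norm ((1 / \<alpha>) *\<^sub>R (x k \<omega> - prox \<alpha> h (x k \<omega> - \<alpha> *\<^sub>R gradf (x k \<omega>)))))^2 \<le> \<epsilon>) = stop k"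
        unfolding stop_def t1 by (simp add: Tv_def pr_def)
    qed
    have sk0: "stop k0" unfolding stop_def using k0(3) by simp
    define Lk where "Lk = (LEAST k. stop k)"
    have Lk: "Lk \<le> k0" unfolding Lk_def by (rule Least_le) (rule sk0)
    have Nb: "real (N k \<omega>) \<le> Cn / \<epsilon>" if "k < Lk" for k
    proof -
      have "\<not> stop k" using that unfolding Lk_def by (rule not_less_Least)
      then have "\<epsilon> < (norm (Tv k \<omega>))^2" unfolding stop_def by simp
      then show ?thesis using elim(1) by blast
    qed
    have "(\<Sum>k<Lk. real (N k \<omega>)) \<le> (\<Sum>k<Lk. Cn / \<epsilon>)" by (rule sum_mono) (simp add: Nb)
    also have "\<dots> = real Lk * (Cn / \<epsilon>)" by simp
    also have "\<dots> \<le> (Bc / \<epsilon> + 2) * (Cn / \<epsilon>)"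
    proof (rule mult_right_mono)
      have "real Lk \<le> real (nat \<lceil>Bc / \<epsilon>\<rceil> + 1)" using Lk k0(2) by simp
      also have "\<dots> \<le> Bc / \<epsilon> + 2"
      proof -
        have "Bc / \<epsilon> \<ge> 0" using Bc_nonneg e by simp
        then have "real (nat \<lceil>Bc / \<epsilon>\<rceil>) = of_int \<lceil>Bc / \<epsilon>\<rceil>" by simp
        also have "\<dots> \<le> Bc / \<epsilon> + 1" by (rule of_int_ceiling_le_add_one)
        finally show ?thesis by simp
      qed
      finally show "real Lk \<le> Bc / \<epsilon> + 2" .
      show "0 \<le> Cn / \<epsilon>" using Cn_pos e by simp
    qed
    also have "\<dots> \<le> (Bc + 2) / \<epsilon> * (Cn / \<epsilon>)"
    proof (rule mult_right_mono)
      have "2 \<le> 2 / \<epsilon>" using e by (simp add: field_simps)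
      then show "Bc / \<epsilon> + 2 \<le> (Bc + 2) / \<epsilon>" by (simp add: add_divide_distrib)
      show "0 \<le> Cn / \<epsilon>" using Cn_pos e by simp
    qed
    also have "\<dots> = (Bc + 2) * Cn * \<epsilon> powr (-2)"
      using e by (simp add: powr_minus power2_eq_square field_simps)
    finally have fin: "(\<Sum>k<Lk. real (N k \<omega>)) \<le> (Bc + 2) * Cn * \<epsilon> powr (-2)" .
    show ?case unfolding eqs Let_def using sk0 fin unfolding Lk_def by blast
  qed
  qed
qed

end

theorem mainTheorem7:
  fixes f :: "'a::euclidean_space \<Rightarrow> real" and gradf :: "'a \<Rightarrow> 'a"
    and h :: "'a \<Rightarrow> ereal" and L :: real
    and P :: "'b measure" and F :: "'a \<Rightarrow> 'b \<Rightarrow> real" and gradF :: "'a \<Rightarrow> 'b \<Rightarrow> 'a"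
    and M :: "'w measure"
    and x :: "nat \<Rightarrow> 'w \<Rightarrow> 'a" and g :: "nat \<Rightarrow> 'w \<Rightarrow> 'a"
    and \<xi> :: "nat \<Rightarrow> nat \<Rightarrow> 'w \<Rightarrow> 'b" and N :: "nat \<Rightarrow> 'w \<Rightarrow> nat"
    and G :: "nat \<Rightarrow> 'w measure"
    and x0 :: 'a and \<alpha> \<sigma> \<eta> \<iota>0 \<nu> :: real and \<delta> :: "nat \<Rightarrow> real"
  defines "G \<equiv> (\<lambda>k. gen_sigma M (insert (x 0) (g ` {..<k})))"
  \<comment> \<open>Assumption A\<close>
  assumes L_pos: "L > 0"
    and f_grad: "\<And>z. (f has_derivative (\<lambda>v. gradf z \<bullet> v)) (at z)"
    and gradf_lip: "\<And>z w. norm (gradf z - gradf w) \<le> L * norm (z - w)"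
    and h_closed: "closed_fun h" and h_convex: "convex_fun h" and h_proper: "proper_fun h"
    and phi_bdd: "\<exists>m::real. \<forall>z. ereal m \<le> ereal (f z) + h z"
  \<comment> \<open>expectation problem (EX)\<close>
    and P_prob: "prob_space P"
    and F_int: "\<And>z. integrable P (F z)"
    and f_exp: "\<And>z. f z = (\<integral>s. F z s \<partial>P)"
    and F_grad: "\<And>z s. s \<in> space P \<Longrightarrow> ((\<lambda>u. F u s) has_derivative (\<lambda>v. gradF z s \<bullet> v)) (at z)"
    and gradF_int: "\<And>z. integrable P (gradF z)"
    and gradf_exp: "\<And>z. gradf z = (\<integral>s. gradF z s \<partial>P)"
  \<comment> \<open>probability space carrying the algorithm\<close>
    and M_prob: "prob_space M"
    and g_meas: "\<And>k. g k \<in> borel_measurable M"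
    and x_meas: "\<And>k. x k \<in> borel_measurable M"
  \<comment> \<open>sample sets: i.i.d. from P, independent of G k\<close>
    and \<xi>_meas: "\<And>k i. \<xi> k i \<in> measurable M P"
    and \<xi>_distr: "\<And>k i. distr M P (\<xi> k i) = P"
    and \<xi>_indep: "\<And>k. prob_space.indep_sets M
        (\<lambda>j. case j of None \<Rightarrow> sets (G k)
                     | Some i \<Rightarrow> {\<xi> k i -` A \<inter> space M | A. A \<in> sets P}) UNIV"
  \<comment> \<open>Assumption V\<close>
    and sigma_nonneg: "\<sigma> \<ge> 0"
    and assmV: "\<And>k i. AE \<omega> in M. nn_cond_exp M (G k)
        (\<lambda>\<omega>'. ennreal ((norm (gradF (x k \<omega>') (\<xi> k i \<omega>') - gradf (x k \<omega>'))) ^ 2)) \<omega>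
        \<le> ennreal (\<sigma> ^ 2)"
  \<comment> \<open>parameters\<close>
    and eta: "0 < \<eta>" "\<eta> < 1"
    and iota: "0 \<le> \<iota>0" "\<iota>0 < sqrt ((1 - \<eta>) / 2)"
    and nu_pos: "\<nu> > 0"
    and alpha: "\<alpha> > 0" "\<alpha> \<le> (1 - \<eta>) / (2 * L)"
  \<comment> \<open>the algorithm, Option I (y_k = x_k), constant step alpha\<close>
    and x_init: "\<And>\<omega>. \<omega> \<in> space M \<Longrightarrow> x 0 \<omega> = x0"
    and x_step: "\<And>k \<omega>. \<omega> \<in> space M \<Longrightarrow> x (Suc k) \<omega> = prox \<alpha> h (x k \<omega> - \<alpha> *\<^sub>R g k \<omega>)"
  \<comment> \<open>E_k[R_alpha(y_k)] is well defined\<close>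
    and R_int: "\<And>k. integrable M (\<lambda>\<omega>. (1 / \<alpha>) *\<^sub>R (x k \<omega> - x (Suc k) \<omega>))"
  \<comment> \<open>sampled estimate with the sample-size rule\<close>
    and sample_rule: "\<And>k. AE \<omega> in M.
        (let D = \<eta>^2 / 4 * (norm (vcond_exp M (G k) (\<lambda>\<omega>'. (1 / \<alpha>) *\<^sub>R (x k \<omega>' - x (Suc k) \<omega>')) \<omega>))^2
                 + \<iota>0^2 * (\<delta> k)^2
         in (D > 0 \<longrightarrow> N k \<omega> = max 1 (nat \<lceil>\<sigma>^2 / D\<rceil>)
                       \<and> g k \<omega> = (1 / real (N k \<omega>)) *\<^sub>R (\<Sum>i<N k \<omega>. gradF (x k \<omega>) (\<xi> k i \<omega>)))
          \<and> (D = 0 \<longrightarrow> g k \<omega> = gradf (x k \<omega>)))"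
  shows
    "(\<delta> = (\<lambda>k. 1 / (real k + 1) powr (1 + \<nu>)) \<longrightarrow>
       (\<exists>C \<epsilon>0. \<epsilon>0 > 0 \<and> (\<forall>\<epsilon>. 0 < \<epsilon> \<and> \<epsilon> < \<epsilon>0 \<longrightarrow>
          (AE \<omega> in M.
             let stop = (\<lambda>k. (\<integral>\<^sup>+ \<omega>'. ennreal ((norm ((1 / \<alpha>) *\<^sub>R (x k \<omega>' - prox \<alpha> h (x k \<omega>' - \<alpha> *\<^sub>R gradf (x k \<omega>')))))^2) \<partial>M) \<le> ennreal \<epsilon>
                        \<or> (norm ((1 / \<alpha>) *\<^sub>R (x k \<omega> - prox \<alpha> h (x k \<omega> - \<alpha> *\<^sub>R gradf (x k \<omega>)))))^2 \<le> \<epsilon>)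
             in (\<exists>k. stop k) \<and>
                (\<Sum>k<(LEAST k. stop k). real (N k \<omega>)) \<le> C * \<epsilon> powr (-(2 + \<nu>))))))
     \<and> (\<delta> = (\<lambda>k. 0) \<longrightarrow>
       (\<exists>C \<epsilon>0. \<epsilon>0 > 0 \<and> (\<forall>\<epsilon>. 0 < \<epsilon> \<and> \<epsilon> < \<epsilon>0 \<longrightarrow>
          (AE \<omega> in M.
             let stop = (\<lambda>k. (\<integral>\<^sup>+ \<omega>'. ennreal ((norm ((1 / \<alpha>) *\<^sub>R (x k \<omega>' - prox \<alpha> h (x k \<omega>' - \<alpha> *\<^sub>R gradf (x k \<omega>')))))^2) \<partial>M) \<le> ennreal \<epsilon>
                        \<or> (norm ((1 / \<alpha>) *\<^sub>R (x k \<omega> - prox \<alpha> h (x k \<omega> - \<alpha> *\<^sub>R gradf (x k \<omega>)))))^2 \<le> \<epsilon>)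
             in (\<exists>k. stop k) \<and>
                (\<Sum>k<(LEAST k. stop k). real (N k \<omega>)) \<le> C * \<epsilon> powr (-2)))))"
proof -
  have G_eq: "G = (\<lambda>k. gen_sigma M (insert (x 0) (g ` {..<k})))" using G_def by simp
  have common: "\<exists>C\<ge>0. \<forall>\<epsilon>. 0 < \<epsilon> \<and> \<epsilon> < 1 \<longrightarrow>
     (AE \<omega> in M.
        let stop = (\<lambda>k. (\<integral>\<^sup>+ \<omega>'. ennreal ((norm ((1 / \<alpha>) *\<^sub>R (x k \<omega>' - prox \<alpha> h (x k \<omega>' - \<alpha> *\<^sub>R gradf (x k \<omega>')))))^2) \<partial>M) \<le> ennreal \<epsilon>
                   \<or> (norm ((1 / \<alpha>) *\<^sub>R (x k \<omega> - prox \<alpha> h (x k \<omega> - \<alpha> *\<^sub>R gradf (x k \<omega>)))))^2 \<le> \<epsilon>)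
        in (\<exists>k. stop k) \<and>
           (\<Sum>k<(LEAST k. stop k). real (N k \<omega>)) \<le> C * \<epsilon> powr (-2))"
    if sq: "summable (\<lambda>k. (\<delta> k)^2)"
  proof -
    interpret S: setting f gradf h L P F gradF M x g \<xi> N G x0 \<alpha> \<sigma> \<eta> \<iota>0 \<delta>
      by (rule setting.intro) (fact | rule G_eq)+
    show ?thesis by (rule S.main_bound)
  qed
  show ?thesis
  proof (intro conjI impI)
    assume d: "\<delta> = (\<lambda>k. 1 / (real k + 1) powr (1 + \<nu>))"
    have sq: "summable (\<lambda>k. (\<delta> k)^2)"
    proof -
      have eq: "(\<delta> k)^2 = real (Suc k) powr (-(2 + 2 * \<nu>))" for k
      proof -
        have pos: "real k + 1 > 0" by simp
        have i: "1 / (real k + 1) powr (1 + \<nu>) = (real k + 1) powr (-(1 + \<nu>))"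
          by (subst powr_minus) (simp add: divide_inverse)
        have "(\<delta> k)^2 = ((real k + 1) powr (-(1 + \<nu>)))^2"
          unfolding d i ..
        also have "\<dots> = (real k + 1) powr (-(1 + \<nu>)) * (real k + 1) powr (-(1 + \<nu>))"
          by (simp add: power2_eq_square)
        also have "\<dots> = (real k + 1) powr (-(2 + 2 * \<nu>))" by (simp add: powr_add[symmetric])
        finally show ?thesis by (simp add: add.commute)
      qed
      have "summable (\<lambda>n. real n powr (-(2 + 2 * \<nu>)))"
        by (subst summable_real_powr_iff) (use nu_pos in simp)
      then have "summable (\<lambda>n. real (Suc n) powr (-(2 + 2 * \<nu>)))"
        by (subst summable_Suc_iff)
      then show ?thesis unfolding eq .
    qed
    from common[OF sq] obtain C where C: "C \<ge> 0" and CC: "\<forall>\<epsilon>. 0 < \<epsilon> \<and> \<epsilon> < 1 \<longrightarrow>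
     (AE \<omega> in M.
        let stop = (\<lambda>k. (\<integral>\<^sup>+ \<omega>'. ennreal ((norm ((1 / \<alpha>) *\<^sub>R (x k \<omega>' - prox \<alpha> h (x k \<omega>' - \<alpha> *\<^sub>R gradf (x k \<omega>')))))^2) \<partial>M) \<le> ennreal \<epsilon>
                   \<or> (norm ((1 / \<alpha>) *\<^sub>R (x k \<omega> - prox \<alpha> h (x k \<omega> - \<alpha> *\<^sub>R gradf (x k \<omega>)))))^2 \<le> \<epsilon>)
        in (\<exists>k. stop k) \<and>
           (\<Sum>k<(LEAST k. stop k). real (N k \<omega>)) \<le> C * \<epsilon> powr (-2))" by blast
    show "\<exists>C \<epsilon>0. \<epsilon>0 > 0 \<and> (\<forall>\<epsilon>. 0 < \<epsilon> \<and> \<epsilon> < \<epsilon>0 \<longrightarrow>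
          (AE \<omega> in M.
             let stop = (\<lambda>k. (\<integral>\<^sup>+ \<omega>'. ennreal ((norm ((1 / \<alpha>) *\<^sub>R (x k \<omega>' - prox \<alpha> h (x k \<omega>' - \<alpha> *\<^sub>R gradf (x k \<omega>')))))^2) \<partial>M) \<le> ennreal \<epsilon>
                        \<or> (norm ((1 / \<alpha>) *\<^sub>R (x k \<omega> - prox \<alpha> h (x k \<omega> - \<alpha> *\<^sub>R gradf (x k \<omega>)))))^2 \<le> \<epsilon>)
             in (\<exists>k. stop k) \<and>
                (\<Sum>k<(LEAST k. stop k). real (N k \<omega>)) \<le> C * \<epsilon> powr (-(2 + \<nu>))))"
    proof (rule exI[of _ C], rule exI[where x="1::real"], intro conjI allI impI)
      fix \<epsilon> :: real assume e: "0 < \<epsilon> \<and> \<epsilon> < 1"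
      have pw: "\<epsilon> powr (-2) \<le> \<epsilon> powr (-(2 + \<nu>))"
        by (rule powr_mono') (use e nu_pos in auto)
      have mono: "C * \<epsilon> powr (-2) \<le> C * \<epsilon> powr (-(2 + \<nu>))" using pw C by (rule mult_left_mono)
      show "AE \<omega> in M.
             let stop = (\<lambda>k. (\<integral>\<^sup>+ \<omega>'. ennreal ((norm ((1 / \<alpha>) *\<^sub>R (x k \<omega>' - prox \<alpha> h (x k \<omega>' - \<alpha> *\<^sub>R gradf (x k \<omega>')))))^2) \<partial>M) \<le> ennreal \<epsilon>
                        \<or> (norm ((1 / \<alpha>) *\<^sub>R (x k \<omega> - prox \<alpha> h (x k \<omega> - \<alpha> *\<^sub>R gradf (x k \<omega>)))))^2 \<le> \<epsilon>)
             in (\<exists>k. stop k) \<and>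
                (\<Sum>k<(LEAST k. stop k). real (N k \<omega>)) \<le> C * \<epsilon> powr (-(2 + \<nu>))"
        using CC[rule_format, OF e] by (rule eventually_mono) (use mono in \<open>auto simp: Let_def\<close>)
    qed simp
  next
    assume d: "\<delta> = (\<lambda>k. 0)"
    have sq: "summable (\<lambda>k. (\<delta> k)^2)" unfolding d by simp
    from common[OF sq] obtain C where C: "C \<ge> 0" and CC: "\<forall>\<epsilon>. 0 < \<epsilon> \<and> \<epsilon> < 1 \<longrightarrow>
     (AE \<omega> in M.
        let stop = (\<lambda>k. (\<integral>\<^sup>+ \<omega>'. ennreal ((norm ((1 / \<alpha>) *\<^sub>R (x k \<omega>' - prox \<alpha> h (x k \<omega>' - \<alpha> *\<^sub>R gradf (x k \<omega>')))))^2) \<partial>M) \<le> ennreal \<epsilon>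
                   \<or> (norm ((1 / \<alpha>) *\<^sub>R (x k \<omega> - prox \<alpha> h (x k \<omega> - \<alpha> *\<^sub>R gradf (x k \<omega>)))))^2 \<le> \<epsilon>)
        in (\<exists>k. stop k) \<and>
           (\<Sum>k<(LEAST k. stop k). real (N k \<omega>)) \<le> C * \<epsilon> powr (-2))" by blast
    show "\<exists>C \<epsilon>0. \<epsilon>0 > 0 \<and> (\<forall>\<epsilon>. 0 < \<epsilon> \<and> \<epsilon> < \<epsilon>0 \<longrightarrow>
          (AE \<omega> in M.
             let stop = (\<lambda>k. (\<integral>\<^sup>+ \<omega>'. ennreal ((norm ((1 / \<alpha>) *\<^sub>R (x k \<omega>' - prox \<alpha> h (x k \<omega>' - \<alpha> *\<^sub>R gradf (x k \<omega>')))))^2) \<partial>M) \<le> ennreal \<epsilon>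
                        \<or> (norm ((1 / \<alpha>) *\<^sub>R (x k \<omega> - prox \<alpha> h (x k \<omega> - \<alpha> *\<^sub>R gradf (x k \<omega>)))))^2 \<le> \<epsilon>)
             in (\<exists>k. stop k) \<and>
                (\<Sum>k<(LEAST k. stop k). real (N k \<omega>)) \<le> C * \<epsilon> powr (-2)))"
      by (rule exI[of _ C], rule exI[where x="1::real"], rule conjI[OF _ CC]) simp
  qed
qed

end
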